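(* Let $G\in L^1_{loc}(\mathbb{R}^d)$ be real-valued with $G\ge0$ $\lambda^d$-a.e. (or $G\le 0$ $\lambda^d$-a.e.), and let $\dot L$ be a Lévy white noise with characteristic triplet $(a,\gamma,\nu)$. If $s(\varphi):=\langle\dot L,G\ast\varphi\rangle$, $\varphi\in\mathcal{D}(\mathbb{R}^d)$, defines a generalized random process, then for every $R>0$ $$\int_{\mathbb{R}}\mathbf{1}_{|r|>1}\,d_{G_R}\!\left(\frac{1}{|r|}\right)\nu(dr)<\infty,\qquad\text{where } G_R(x):=\int_{B_R(x)}|G(y)|\lambda^d(dy).$$
   Context: $\mathcal{D}(\mathbb{R}^d)$ is the space of smooth compactly supported real functions with its usual topology. A generalized random process is a linear (a.s.) map $s:\mathcal{D}(\mathbb{R}^d)\to L^0(\Omega)$ continuous with respect to convergence in probability. A Lévy white noise with characteristic triplet $(a,\gamma,\nu)$ is a generalized random process $\dot L$ with $\mathbb{E}\exp(i\langle\dot L,\varphi\rangle)=\exp\big(\int_{\mathbb{R}^d}\psi(\varphi(x))dx\big)$, $\psi(z)=i\gamma z-\tfrac12 az^2+\int(e^{ixz}-1-ixz\mathbf{1}_{|x|\le1})\nu(dx)$; it extends to a Lévy basis $L$, and $\langle\dot L,f\rangle:=\int f\,dL$ for measurable $f$ integrable with respect to $L$ in the sense of Rajput and Rosiński (in particular "$s$ defines a generalized process" includes that $G\ast\varphi$ is so integrable for each $\varphi$). $d_f(\alpha):=\lambda^d(\{x:|f(x)|>\alpha\})$; $B_R(x)$ is the open Euclidean ball. *)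

theory Defs
  imports "HOL-Probability.Probability"
begin

fun pderivs :: "('a::euclidean_space) list \<Rightarrow> ('a \<Rightarrow> real) \<Rightarrow> ('a \<Rightarrow> real)" where
  "pderivs [] f = f"
| "pderivs (v # vs) f = (\<lambda>x. frechet_derivative (pderivs vs f) (at x) v)"

definition smooth_fun :: "('a::euclidean_space \<Rightarrow> real) \<Rightarrow> bool" where
  "smooth_fun f \<longleftrightarrow> (\<forall>vs \<in> lists Basis. pderivs vs f differentiable_on UNIV)"

definition fsupp :: "('a::euclidean_space \<Rightarrow> real) \<Rightarrow> 'a set" where
  "fsupp f = closure {x. f x \<noteq> 0}"

definition test_functions :: "('a::euclidean_space \<Rightarrow> real) set" where
  "test_functions = {f. smooth_fun f \<and> compact (fsupp f)}"

definition D_converges :: "(nat \<Rightarrow> 'a::euclidean_space \<Rightarrow> real) \<Rightarrow> ('a \<Rightarrow> real) \<Rightarrow> bool" where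
  "D_converges fs f \<longleftrightarrow> (\<forall>n. fs n \<in> test_functions) \<and> f \<in> test_functions \<and>
     (\<exists>K. compact K \<and> fsupp f \<subseteq> K \<and> (\<forall>n. fsupp (fs n) \<subseteq> K)) \<and>
     (\<forall>vs \<in> lists Basis. uniform_limit UNIV (\<lambda>n. pderivs vs (fs n)) (pderivs vs f) sequentially)"

definition conv_in_prob :: "'w measure \<Rightarrow> (nat \<Rightarrow> 'w \<Rightarrow> real) \<Rightarrow> ('w \<Rightarrow> real) \<Rightarrow> bool" where
  "conv_in_prob M X Y \<longleftrightarrow>
     (\<forall>e>0. (\<lambda>n. measure M {\<omega> \<in> space M. \<bar>X n \<omega> - Y \<omega>\<bar> > e}) \<longlonglongrightarrow> 0)"

definition gen_random_process ::
  "'w measure \<Rightarrow> (('a::euclidean_space \<Rightarrow> real) \<Rightarrow> 'w \<Rightarrow> real) \<Rightarrow> bool" where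
  "gen_random_process M s \<longleftrightarrow>
     (\<forall>\<phi> \<in> test_functions. s \<phi> \<in> borel_measurable M) \<and>
     (\<forall>\<phi> \<in> test_functions. \<forall>\<psi> \<in> test_functions. \<forall>a b :: real.
        AE \<omega> in M. s (\<lambda>x. a * \<phi> x + b * \<psi> x) \<omega> = a * s \<phi> \<omega> + b * s \<psi> \<omega>) \<and>
     (\<forall>\<phi>s \<phi>. D_converges \<phi>s \<phi> \<longrightarrow> conv_in_prob M (\<lambda>n. s (\<phi>s n)) (s \<phi>))"

definition levy_measure :: "real measure \<Rightarrow> bool" where
  "levy_measure \<nu> \<longleftrightarrow> sets \<nu> = sets borel \<and> emeasure \<nu> {0} = 0 \<and>
     (\<integral>\<^sup>+ r. ennreal (min 1 (r\<^sup>2)) \<partial>\<nu>) < \<infinity>"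

definition levy_exponent :: "real \<Rightarrow> real \<Rightarrow> real measure \<Rightarrow> real \<Rightarrow> complex" where
  "levy_exponent a \<gamma> \<nu> z =
     \<i> * complex_of_real (\<gamma> * z) - complex_of_real (a * z\<^sup>2 / 2) +
     (\<integral> x. (cis (x * z) - 1 - \<i> * complex_of_real (x * z * indicator {x. \<bar>x\<bar> \<le> 1} x)) \<partial>\<nu>)"

definition bounded_borel :: "'a::euclidean_space set set" where
  "bounded_borel = {A. A \<in> sets borel \<and> bounded A}"

definition levy_basis ::
  "'w measure \<Rightarrow> ('a::euclidean_space set \<Rightarrow> 'w \<Rightarrow> real) \<Rightarrow> real \<Rightarrow> real \<Rightarrow> real measure \<Rightarrow> bool" where
  "levy_basis M L a \<gamma> \<nu> \<longleftrightarrow>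
     (\<forall>A \<in> bounded_borel. L A \<in> borel_measurable M) \<and>
     (\<forall>A \<in> bounded_borel. \<forall>t::real.
        (\<integral> \<omega>. cis (t * L A \<omega>) \<partial>M) = exp (complex_of_real (measure lebesgue A) * levy_exponent a \<gamma> \<nu> t)) \<and>
     (\<forall>\<A>. finite \<A> \<and> \<A> \<subseteq> bounded_borel \<and> disjoint \<A> \<longrightarrow>
        prob_space.indep_vars M (\<lambda>_. borel) L \<A>) \<and>
     (\<forall>A :: nat \<Rightarrow> 'a set. range A \<subseteq> bounded_borel \<and> disjoint_family A \<and> bounded (\<Union>n. A n) \<longrightarrow>
        (AE \<omega> in M. (\<lambda>n. L (A n) \<omega>) sums L (\<Union>n. A n) \<omega>))"

text \<open>Simple functions: lists of (coefficient, bounded Borel set) with pairwise disjoint sets.\<close>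
definition valid_simple :: "(real \<times> 'a::euclidean_space set) list \<Rightarrow> bool" where
  "valid_simple ps \<longleftrightarrow> (\<forall>p \<in> set ps. snd p \<in> bounded_borel) \<and>
     (\<forall>i < length ps. \<forall>j < length ps. i \<noteq> j \<longrightarrow> snd (ps ! i) \<inter> snd (ps ! j) = {})"

definition simple_fun_of :: "(real \<times> 'a set) list \<Rightarrow> 'a \<Rightarrow> real" where
  "simple_fun_of ps x = (\<Sum>p \<leftarrow> ps. fst p * indicator (snd p) x)"

definition simple_int :: "('a set \<Rightarrow> 'w \<Rightarrow> real) \<Rightarrow> (real \<times> 'a set) list \<Rightarrow> 'a set \<Rightarrow> 'w \<Rightarrow> real" where
  "simple_int L ps A \<omega> = (\<Sum>p \<leftarrow> ps. fst p * L (A \<inter> snd p) \<omega>)"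

text \<open>rr_integral M L f X: f is integrable w.r.t. L (Rajput--Rosinski) and X is (a version of) its integral.\<close>
definition rr_integral ::
  "'w measure \<Rightarrow> ('a::euclidean_space set \<Rightarrow> 'w \<Rightarrow> real) \<Rightarrow> ('a \<Rightarrow> real) \<Rightarrow> ('w \<Rightarrow> real) \<Rightarrow> bool" where
  "rr_integral M L f X \<longleftrightarrow>
     (\<exists>ps :: nat \<Rightarrow> (real \<times> 'a set) list.
        (\<forall>n. valid_simple (ps n)) \<and>
        (AE x in lebesgue. (\<lambda>n. simple_fun_of (ps n) x) \<longlonglongrightarrow> f x) \<and>
        (\<forall>A \<in> sets borel. \<exists>Y. Y \<in> borel_measurable M \<and> conv_in_prob M (\<lambda>n. simple_int L (ps n) A) Y) \<and>
        X \<in> borel_measurable M \<and> conv_in_prob M (\<lambda>n. simple_int L (ps n) UNIV) X)"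

definition levy_white_noise ::
  "'w measure \<Rightarrow> (('a::euclidean_space \<Rightarrow> real) \<Rightarrow> 'w \<Rightarrow> real) \<Rightarrow> real \<Rightarrow> real \<Rightarrow> real measure \<Rightarrow> bool" where
  "levy_white_noise M Ldot a \<gamma> \<nu> \<longleftrightarrow> gen_random_process M Ldot \<and>
     (\<forall>\<phi> \<in> test_functions.
        (\<integral> \<omega>. cis (Ldot \<phi> \<omega>) \<partial>M) = exp (\<integral> x. levy_exponent a \<gamma> \<nu> (\<phi> x) \<partial>lborel))"

definition convol :: "('a::euclidean_space \<Rightarrow> real) \<Rightarrow> ('a \<Rightarrow> real) \<Rightarrow> 'a \<Rightarrow> real" where
  "convol G \<phi> x = (\<integral> y. G (x - y) * \<phi> y \<partial>lebesgue)"

definition locally_integrable :: "('a::euclidean_space \<Rightarrow> real) \<Rightarrow> bool" where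
  "locally_integrable G \<longleftrightarrow> (\<forall>K. compact K \<longrightarrow> set_integrable lebesgue K G)"

definition distrib_fun :: "('a::euclidean_space \<Rightarrow> real) \<Rightarrow> real \<Rightarrow> ennreal" where
  "distrib_fun f \<alpha> = emeasure lebesgue {x. \<bar>f x\<bar> > \<alpha>}"

definition ball_avg :: "('a::euclidean_space \<Rightarrow> real) \<Rightarrow> real \<Rightarrow> 'a \<Rightarrow> real" where
  "ball_avg G R x = (\<integral> y \<in> ball x R. \<bar>G y\<bar> \<partial>lebesgue)"

end

theory Submission
  imports Defs "HOL-Computational_Algebra.Polynomial"
begin

fun PD :: "nat \<Rightarrow> real poly" where
  "PD 0 = 1"
| "PD (Suc m) = [:0,0,1:] * (PD m - pderiv (PD m))"

definition DD :: "nat \<Rightarrow> real \<Rightarrow> real" where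
  "DD m t = (if t > 0 then poly (PD m) (1/t) * exp (-1/t) else 0)"

lemma DD_nonpos: "t \<le> 0 \<Longrightarrow> DD m t = 0"
  by (simp add: DD_def)

lemma poly_exp_tendsto: "((\<lambda>y. poly p y * exp (-y)) \<longlongrightarrow> (0::real)) at_top"
proof -
  have "((\<lambda>y. \<Sum>k\<le>degree p. coeff p k * (y ^ k / exp y)) \<longlongrightarrow> (\<Sum>k\<le>degree p. coeff p k * 0)) at_top"
    by (intro tendsto_sum tendsto_mult tendsto_const tendsto_power_div_exp_0)
  moreover have "(\<lambda>y. \<Sum>k\<le>degree p. coeff p k * (y ^ k / exp y)) = (\<lambda>y. poly p y * exp (-y))"
    by (auto simp: poly_altdef sum_distrib_right exp_minus divide_inverse mult.assoc)
  ultimately show ?thesis by simp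
qed

lemma DD_right_lim: "((\<lambda>t. DD m t / t) \<longlongrightarrow> 0) (at_right (0::real))"
proof -
  have "((\<lambda>y. poly ([:0,1:] * PD m) y * exp (-y)) \<longlongrightarrow> (0::real)) at_top"
    by (rule poly_exp_tendsto)
  then have "((\<lambda>t. poly ([:0,1:] * PD m) (inverse t) * exp (- inverse t)) \<longlongrightarrow> (0::real)) (at_right 0)"
    using filterlim_compose filterlim_inverse_at_top_right by blast
  moreover have "eventually (\<lambda>t. poly ([:0,1:] * PD m) (inverse t) * exp (- inverse t) = DD m t / t) (at_right (0::real))"
    by (rule eventually_mono[OF eventually_at_right_less[of 0]]) (unfold DD_def, simp add: inverse_eq_divide)
  ultimately show ?thesis by (rule Lim_transform_eventually)
qed

lemma DD_deriv: "(DD m has_real_derivative DD (Suc m) t) (at t)"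
proof (cases "t > 0")
  case True
  have i: "((\<lambda>t. 1/t) has_real_derivative (- 1/t^2)) (at t)"
    using True DERIV_inverse[of t] by (simp add: divide_inverse power2_eq_square)
  have p: "((\<lambda>t. poly (PD m) (1/t)) has_real_derivative poly (pderiv (PD m)) (1/t) * (- 1/t^2)) (at t)"
    using DERIV_chain2[OF poly_DERIV i] .
  have e0: "((\<lambda>t. -1/t) has_real_derivative (1/t^2)) (at t)"
    using DERIV_minus[OF i] by simp
  have e: "((\<lambda>t. exp (-1/t)) has_real_derivative exp (-1/t) * (1/t^2)) (at t)"
    using DERIV_chain2[OF DERIV_exp e0] .
  have d: "((\<lambda>t. poly (PD m) (1/t) * exp (-1/t)) has_real_derivative
      poly (pderiv (PD m)) (1/t) * (- 1/t^2) * exp (-1/t) + poly (PD m) (1/t) * (exp (-1/t) * (1/t^2))) (at t)"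
    using DERIV_mult[OF p e] by (simp add: mult.commute)
  have eq: "poly (pderiv (PD m)) (1/t) * (- 1/t^2) * exp (-1/t) + poly (PD m) (1/t) * (exp (-1/t) * (1/t^2)) = DD (Suc m) t"
    using True by (simp add: DD_def field_simps power2_eq_square)
  show ?thesis
    using has_field_derivative_transform_within_open[of "\<lambda>t. poly (PD m) (1/t) * exp (-1/t)" _ t "{0<..}" "DD m"] d eq True
    by (auto simp: DD_def)
next
  case False
  show ?thesis
  proof (cases "t < 0")
    case True
    have "((\<lambda>_. 0) has_real_derivative 0) (at t)" by simp
    then show ?thesis
      using has_field_derivative_transform_within_open[of "\<lambda>_. 0" 0 t "{..<0}" "DD m"] True
      by (auto simp: DD_def)
  next
    case False
    with \<open>\<not> t > 0\<close> have t0: "t = 0" by simp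
    have "((\<lambda>s. (DD m s - DD m 0) / (s - 0)) \<longlongrightarrow> 0) (at (0::real))"
    proof (rule filterlim_split_at)
      show "((\<lambda>s. (DD m s - DD m 0) / (s - 0)) \<longlongrightarrow> 0) (at_right (0::real))"
        using DD_right_lim[of m] by (simp add: DD_nonpos)
      have "eventually (\<lambda>s. s \<in> {-1<..<0}) (at_left (0::real))"
        by (rule eventually_at_left_real) simp
      then have "eventually (\<lambda>s. 0 = (DD m s - DD m 0) / (s - 0)) (at_left (0::real))"
        by (rule eventually_mono) (auto simp: DD_nonpos)
      then show "((\<lambda>s. (DD m s - DD m 0) / (s - 0)) \<longlongrightarrow> 0) (at_left (0::real))"
        by (rule Lim_transform_eventually[OF tendsto_const])
    qed
    moreover have "DD (Suc m) 0 = 0" by (simp add: DD_nonpos)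
    ultimately show ?thesis using t0 by (simp add: has_field_derivative_iff)
  qed
qed


inductive sm :: "(real^'n \<Rightarrow> real) \<Rightarrow> bool" where
  sm_const: "sm (\<lambda>x. c)"
| sm_coord: "sm (\<lambda>x. DD m (\<sigma> * x$i + \<tau>))"
| sm_add: "sm f \<Longrightarrow> sm g \<Longrightarrow> sm (\<lambda>x. f x + g x)"
| sm_mult: "sm f \<Longrightarrow> sm g \<Longrightarrow> sm (\<lambda>x. f x * g x)"

lemma sm_has_deriv:
  assumes "sm f"
  shows "\<exists>F. (\<forall>x. (f has_derivative F x) (at x)) \<and> (\<forall>v. sm (\<lambda>x. F x v))"
  using assms
proof induction
  case (sm_const c)
  show ?case
    by (rule exI[of _ "\<lambda>x h. 0"]) (auto intro: sm.sm_const)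
next
  case (sm_coord m \<sigma> i \<tau>)
  have "\<forall>x. ((\<lambda>x. DD m (\<sigma> * x$i + \<tau>)) has_derivative (\<lambda>h. DD (Suc m) (\<sigma> * x$i + \<tau>) * (\<sigma> * h$i))) (at x)"
  proof
    fix x
    have l: "((\<lambda>x. \<sigma> * x$i + \<tau>) has_derivative (\<lambda>h. \<sigma> * h$i)) (at x)"
      by (auto intro!: derivative_eq_intros bounded_linear.has_derivative[OF bounded_linear_vec_nth])
    have d: "(DD m has_derivative (\<lambda>h. DD (Suc m) (\<sigma> * x$i + \<tau>) * h)) (at (\<sigma> * x$i + \<tau>))"
      using DD_deriv[of m "\<sigma> * x$i + \<tau>"] by (simp add: has_field_derivative_imp_has_derivative)
    show "((\<lambda>x. DD m (\<sigma> * x$i + \<tau>)) has_derivative (\<lambda>h. DD (Suc m) (\<sigma> * x$i + \<tau>) * (\<sigma> * h$i))) (at x)"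
      using has_derivative_compose[OF l d] by simp
  qed
  moreover have "\<forall>v. sm (\<lambda>x. DD (Suc m) (\<sigma> * x$i + \<tau>) * (\<sigma> * v$i))"
    by (auto intro!: sm.intros)
  ultimately show ?case
    by (intro exI[of _ "\<lambda>x h. DD (Suc m) (\<sigma> * x$i + \<tau>) * (\<sigma> * h$i)"]) simp
next
  case (sm_add f g)
  then obtain F G where F: "\<forall>x. (f has_derivative F x) (at x)" "\<forall>v. sm (\<lambda>x. F x v)"
    and G: "\<forall>x. (g has_derivative G x) (at x)" "\<forall>v. sm (\<lambda>x. G x v)" by blast
  show ?case
    by (rule exI[of _ "\<lambda>x h. F x h + G x h"]) (auto intro!: has_derivative_add sm.intros F[rule_format] G[rule_format])
next
  case (sm_mult f g)
  then obtain F G where F: "\<forall>x. (f has_derivative F x) (at x)" "\<forall>v. sm (\<lambda>x. F x v)"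
    and G: "\<forall>x. (g has_derivative G x) (at x)" "\<forall>v. sm (\<lambda>x. G x v)" by blast
  show ?case
    by (rule exI[of _ "\<lambda>x h. f x * G x h + F x h * g x"])
       (auto intro!: has_derivative_mult sm.intros F[rule_format] G[rule_format] sm_mult.hyps)
qed

lemma sm_pderivs: "sm f \<Longrightarrow> sm (pderivs vs f)"
proof (induction vs)
  case Nil then show ?case by simp
next
  case (Cons v vs)
  then have "sm (pderivs vs f)" by simp
  from sm_has_deriv[OF this] obtain F where F: "\<forall>x. (pderivs vs f has_derivative F x) (at x)" "\<forall>v. sm (\<lambda>x. F x v)"
    by blast
  have "pderivs (v # vs) f = (\<lambda>x. F x v)"
  proof
    fix x
    show "pderivs (v # vs) f x = F x v"
      using frechet_derivative_at[OF F(1)[rule_format, of x]] by simp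
  qed
  then show ?case using F(2) by simp
qed

lemma sm_smooth: "sm f \<Longrightarrow> smooth_fun f"
  unfolding smooth_fun_def
proof safe
  fix vs
  assume "sm f"
  then have "sm (pderivs vs f)" by (rule sm_pderivs)
  from sm_has_deriv[OF this] obtain F where "\<forall>x. (pderivs vs f has_derivative F x) (at x)" by blast
  then show "pderivs vs f differentiable_on UNIV"
    by (auto simp: differentiable_on_def differentiable_def intro: has_derivative_at_withinI)
qed

lemma sm_prod: "finite S \<Longrightarrow> (\<And>i. i \<in> S \<Longrightarrow> sm (f i)) \<Longrightarrow> sm (\<lambda>x. \<Prod>i\<in>S. f i x)"
proof (induction S rule: finite_induct)
  case empty then show ?case by (simp add: sm_const)
next
  case (insert a S) then show ?case by (auto intro!: sm_mult)
qed


lemma DD0_eq: "DD 0 t = (if t > 0 then exp (-1/t) else 0)"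
  by (simp add: DD_def)

lemma DD0_nonneg: "0 \<le> DD 0 t" by (simp add: DD0_eq)

lemma DD0_le1: "DD 0 t \<le> 1" by (simp add: DD0_eq)

lemma DD0_ge: "t \<ge> 1 \<Longrightarrow> DD 0 t \<ge> exp (-1)"
  by (simp add: DD0_eq divide_le_eq_1)

definition bump :: "real \<Rightarrow> real^'n \<Rightarrow> real" where
  "bump c x = exp 2 ^ CARD('n) * (\<Prod>i\<in>UNIV. DD 0 (c - x$i) * DD 0 (c + x$i))"

lemma bump_sm: "sm (bump c :: real^'n::finite \<Rightarrow> real)"
proof -
  have fac: "\<And>i. sm (\<lambda>x::real^'n. DD 0 ((-1) * x$i + c) * DD 0 (1 * x$i + c))"
    by (rule sm_mult[OF sm_coord sm_coord])
  have "sm (\<lambda>x::real^'n. \<Prod>i\<in>UNIV. DD 0 ((-1) * x$i + c) * DD 0 (1 * x$i + c))"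
    by (rule sm_prod[OF _ fac]) simp
  then have "sm (\<lambda>x::real^'n. exp 2 ^ CARD('n) * (\<Prod>i\<in>UNIV. DD 0 ((-1) * x$i + c) * DD 0 (1 * x$i + c)))"
    by (rule sm_mult[OF sm_const])
  then show ?thesis unfolding bump_def by (simp add: add.commute)
qed

lemma bump_nonneg: "0 \<le> bump c x"
  unfolding bump_def by (intro mult_nonneg_nonneg prod_nonneg) (auto simp: DD0_nonneg)

lemma bump_le: fixes x :: "real^'n" shows "bump c x \<le> exp 2 ^ CARD('n)"
proof -
  have "(\<Prod>i\<in>UNIV. DD 0 (c - x$i) * DD 0 (c + x$i)) \<le> (\<Prod>i\<in>(UNIV::'n set). 1)"
    by (intro prod_mono) (auto simp: DD0_nonneg DD0_le1 intro: mult_le_one)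
  then show ?thesis unfolding bump_def by simp
qed

lemma bump_zero: fixes x :: "real^'n" shows "\<bar>x$i\<bar> \<ge> c \<Longrightarrow> bump c x = 0"
proof -
  assume a: "\<bar>x$i\<bar> \<ge> c"
  have "DD 0 (c - x$i) * DD 0 (c + x$i) = 0"
    using a by (cases "x$i \<ge> 0") (auto simp: DD_nonpos)
  then show ?thesis unfolding bump_def by (auto simp: prod_zero_iff)
qed

lemma bump_ge1:
  fixes x :: "real^'n"
  assumes "norm x < R" "R + 1 \<le> c"
  shows "bump c x \<ge> 1"
proof -
  have "(\<Prod>i\<in>(UNIV::'n set). exp (-1) * exp (-1)) \<le> (\<Prod>i\<in>UNIV. DD 0 (c - x$i) * DD 0 (c + x$i))"
  proof (intro prod_mono conjI)
    fix i
    have "\<bar>x$i\<bar> \<le> norm x" by (rule component_le_norm_cart)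
    then have "c - x$i \<ge> 1" "c + x$i \<ge> 1" using assms by auto
    then show "exp (-1) * exp (-1) \<le> DD 0 (c - x$i) * DD 0 (c + x$i)"
      by (intro mult_mono DD0_ge) (auto simp: DD0_nonneg)
  qed auto
  moreover have "exp (2::real) ^ CARD('n) * (\<Prod>i\<in>(UNIV::'n set). exp (-1) * exp (-1)) = 1"
  proof -
    have "exp (2::real) * (exp (-1) * exp (-1)) = 1" by (simp add: exp_add[symmetric])
    then show ?thesis by (simp add: power_mult_distrib[symmetric])
  qed
  ultimately have "1 \<le> exp (2::real) ^ CARD('n) * (\<Prod>i\<in>UNIV. DD 0 (c - x$i) * DD 0 (c + x$i))"
    using mult_left_mono[of "\<Prod>i\<in>(UNIV::'n set). exp (-1) * exp (-1)" "\<Prod>i\<in>UNIV. DD 0 (c - x$i) * DD 0 (c + x$i)" "exp (2::real) ^ CARD('n)"]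
    by simp
  then show ?thesis by (simp add: bump_def)
qed

lemma bump_test: "(bump c :: real^'n::finite \<Rightarrow> real) \<in> test_functions"
proof -
  have sub: "{x::real^'n. bump c x \<noteq> 0} \<subseteq> cbox (- vec c) (vec c)"
  proof
    fix x assume x: "x \<in> {x. bump c x \<noteq> 0}"
    have "\<forall>i. \<bar>x$i\<bar> < c"
    proof (intro allI, rule ccontr)
      fix i assume "\<not> \<bar>x$i\<bar> < c"
      then have "bump c x = 0" by (intro bump_zero[where i=i]) simp
      with x show False by simp
    qed
    then have "\<forall>i. - c \<le> x$i \<and> x$i \<le> c"
    proof (intro allI)
      fix i assume "\<forall>i. \<bar>x$i\<bar> < c"
      then have "\<bar>x$i\<bar> < c" by blast
      then show "- c \<le> x$i \<and> x$i \<le> c" by linarith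
    qed
    then show "x \<in> cbox (- vec c) (vec c)"
      by (auto simp: mem_box_cart)
  qed
  have "compact (fsupp (bump c :: real^'n \<Rightarrow> real))"
    unfolding fsupp_def compact_eq_bounded_closed
    using sub bounded_cbox bounded_closure bounded_subset by blast
  then show ?thesis
    unfolding test_functions_def using sm_smooth[OF bump_sm] by simp
qed

lemma bump_cont: "continuous_on UNIV (bump c :: real^'n \<Rightarrow> real)"
proof -
  obtain F where "\<forall>x. ((bump c :: real^'n \<Rightarrow> real) has_derivative F x) (at x)"
    using sm_has_deriv[OF bump_sm] by blast
  then show ?thesis
    by (meson continuous_at_imp_continuous_on has_derivative_continuous)
qed


lemma bump_supp:
  fixes w :: "real^'n"
  assumes "c * real CARD('n) \<le> norm w"
  shows "bump c w = 0"
proof (rule ccontr)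
  assume ne: "bump c w \<noteq> 0"
  have lt: "\<forall>i. \<bar>w$i\<bar> < c"
  proof (intro allI, rule ccontr)
    fix i assume "\<not> \<bar>w$i\<bar> < c"
    then have "bump c w = 0" by (intro bump_zero[where i=i]) simp
    with ne show False by simp
  qed
  have "norm w \<le> (\<Sum>i\<in>UNIV. \<bar>w$i\<bar>)" by (rule norm_le_l1_cart)
  also have "\<dots> < (\<Sum>i\<in>(UNIV::'n set). c)"
    using lt by (intro sum_strict_mono) auto
  also have "\<dots> = c * real CARD('n)" by simp
  finally show False using assms by simp
qed

lemma lebesgue_reflect:
  fixes x :: "'a::euclidean_space"
  shows "lebesgue = distr lebesgue lebesgue (\<lambda>y. x - y)"
    and "(\<lambda>y. x - y) \<in> lebesgue \<rightarrow>\<^sub>M lebesgue"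
proof -
  have eq: "(\<lambda>y. x + (\<Sum>j\<in>Basis. ((-1) * (y \<bullet> j)) *\<^sub>R j)) = (\<lambda>y::'a. x - y)"
  proof
    fix y :: 'a
    have "(\<Sum>j\<in>Basis. ((-1) * (y \<bullet> j)) *\<^sub>R j) = - (\<Sum>j\<in>Basis. (y \<bullet> j) *\<^sub>R j)"
      by (simp add: sum_negf[symmetric])
    then show "x + (\<Sum>j\<in>Basis. ((-1) * (y \<bullet> j)) *\<^sub>R j) = x - y"
      by (simp add: euclidean_representation)
  qed
  have "lebesgue = density (distr lebesgue lebesgue (\<lambda>y::'a. x - y)) (\<lambda>_. (\<Prod>j\<in>(Basis::'a set). \<bar>-1::real\<bar>))"
    using lebesgue_affine_euclidean[of "\<lambda>_. -1" x] eq by simp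
  then show "lebesgue = distr lebesgue lebesgue (\<lambda>y. x - y)"
    by (simp add: density_1)
  show "(\<lambda>y. x - y) \<in> lebesgue \<rightarrow>\<^sub>M lebesgue"
    using lebesgue_affine_measurable[of "\<lambda>_. -1" x] eq by simp
qed

lemma conv_ge:
  fixes H :: "real^'n \<Rightarrow> real"
  assumes li: "locally_integrable H" and pos: "AE z in lebesgue. H z \<ge> 0"
    and R: "R > 0" and c: "c = R + 1"
  shows "convol H (bump c) x \<ge> ball_avg H R x"
proof -
  define K where "K = cball x (c * real CARD('n))"
  define g where "g z = H z * bump c (x - z)" for z
  have cpos: "c > 0" using R c by simp
  have HK: "integrable lebesgue (\<lambda>z. indicator K z *\<^sub>R H z)"
    using li unfolding locally_integrable_def set_integrable_def K_def by auto
  have bm_bump: "(\<lambda>z. bump c (x - z)) \<in> borel_measurable lebesgue"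
    by (intro measurable_completion borel_measurable_continuous_on[OF bump_cont]) simp
  have geq: "g z = (indicator K z *\<^sub>R H z) * bump c (x - z)" for z
  proof (cases "z \<in> K")
    case False
    then have "c * real CARD('n) \<le> norm (x - z)"
      by (simp add: K_def dist_norm)
    then show ?thesis by (simp add: g_def bump_supp)
  qed (simp add: g_def)
  have i1: "integrable lebesgue (\<lambda>z. exp 2 ^ CARD('n) * (indicator K z *\<^sub>R H z))"
    using HK by simp
  have i2: "g \<in> borel_measurable lebesgue"
    unfolding geq[abs_def] using HK bm_bump by (intro borel_measurable_times) auto
  have i3: "AE z in lebesgue. norm (g z) \<le> norm (exp 2 ^ CARD('n) * (indicator K z *\<^sub>R H z))"
  proof (intro AE_I2)
    fix z
    have "norm (g z) = \<bar>indicator K z *\<^sub>R H z\<bar> * bump c (x - z)"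
      by (simp add: geq abs_mult bump_nonneg)
    also have "\<dots> \<le> \<bar>indicator K z *\<^sub>R H z\<bar> * exp 2 ^ CARD('n)"
      by (intro mult_left_mono bump_le) auto
    finally show "norm (g z) \<le> norm (exp 2 ^ CARD('n) * (indicator K z *\<^sub>R H z))"
      by (simp add: abs_mult mult.commute)
  qed
  have gint: "integrable lebesgue g"
    by (rule Bochner_Integration.integrable_bound[OF i1 i2 i3])
  have gmeas: "g \<in> borel_measurable lebesgue" using gint by auto
  have "convol H (bump c) x = (\<integral>y. g (x - y) \<partial>lebesgue)"
    by (simp add: convol_def g_def)
  also have "\<dots> = integral\<^sup>L (distr lebesgue lebesgue (\<lambda>y. x - y)) g"
    by (rule integral_distr[symmetric]) (use lebesgue_reflect(2) gmeas in auto)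
  also have "\<dots> = integral\<^sup>L lebesgue g"
    using lebesgue_reflect(1)[of x] by simp
  finally have cv: "convol H (bump c) x = integral\<^sup>L lebesgue g" .
  have bint: "integrable lebesgue (\<lambda>z. indicator (ball x R) z *\<^sub>R \<bar>H z\<bar>)"
  proof -
    have "set_integrable lebesgue (cball x R) H"
      using li unfolding locally_integrable_def by auto
    then have "set_integrable lebesgue (ball x R) H"
      by (rule set_integrable_subset) auto
    then show ?thesis using set_integrable_abs unfolding set_integrable_def by blast
  qed
  have "ball_avg H R x = integral\<^sup>L lebesgue (\<lambda>z. indicator (ball x R) z *\<^sub>R \<bar>H z\<bar>)"
    by (simp add: ball_avg_def set_lebesgue_integral_def)
  also have "\<dots> \<le> integral\<^sup>L lebesgue g"
  proof (rule integral_mono_AE[OF bint gint])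
    show "AE z in lebesgue. indicator (ball x R) z *\<^sub>R \<bar>H z\<bar> \<le> g z"
      using pos
    proof (rule eventually_mono)
      fix z assume hz: "H z \<ge> 0"
      show "indicator (ball x R) z *\<^sub>R \<bar>H z\<bar> \<le> g z"
      proof (cases "z \<in> ball x R")
        case True
        then have "norm (x - z) < R" by (simp add: dist_norm)
        then have "bump c (x - z) \<ge> 1" using c by (intro bump_ge1) auto
        then have "H z * 1 \<le> H z * bump c (x - z)" using hz by (intro mult_left_mono) auto
        then show ?thesis using True hz by (simp add: g_def)
      next
        case False
        then show ?thesis using hz by (simp add: g_def bump_nonneg)
      qed
    qed
  qed
  finally show ?thesis using cv by simp
qed

lemma cis_diff_le: "cmod (cis a - cis b) \<le> \<bar>a - b\<bar>"
proof -
  have "cis a - cis b = cis b * (iexp (a - b) - 1)"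
    by (simp add: cis_conv_exp algebra_simps exp_diff[symmetric] mult_exp_exp)
  then have "cmod (cis a - cis b) = cmod (iexp (a - b) - (\<Sum>k\<le>0. (\<i> * (a - b))^k / fact k))"
    by (simp add: norm_mult)
  also have "\<dots> \<le> \<bar>a - b\<bar>^(Suc 0) / fact (Suc 0)"
    by (rule iexp_approx1)
  finally show ?thesis by simp
qed

lemma cis_diff_le2: "cmod (cis a - cis b) \<le> 2"
proof -
  have "cmod (cis a - cis b) \<le> cmod (cis a) + cmod (cis b)" by (rule norm_triangle_ineq4)
  then show ?thesis by simp
qed

lemma char_diff_bound:
  assumes P: "prob_space M"
    and X: "X \<in> borel_measurable M" and Y: "Y \<in> borel_measurable M" and e: "e > 0"
  shows "cmod ((\<integral>\<omega>. cis (t * X \<omega>) \<partial>M) - (\<integral>\<omega>. cis (t * Y \<omega>) \<partial>M))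
    \<le> \<bar>t\<bar> * e + 2 * measure M {\<omega> \<in> space M. \<bar>X \<omega> - Y \<omega>\<bar> > e}"
proof -
  interpret prob_space M by fact
  define A where "A = {\<omega> \<in> space M. \<bar>X \<omega> - Y \<omega>\<bar> > e}"
  have A: "A \<in> sets M" unfolding A_def using X Y by measurable
  have ic: "integrable M (\<lambda>\<omega>. cis (t * Z \<omega>))" if "Z \<in> borel_measurable M" for Z
  proof (rule integrable_const_bound[where B=1])
    have "(\<lambda>\<omega>. cis (t * Z \<omega>)) = (\<lambda>\<omega>. cis ((\<lambda>\<omega>. t * Z \<omega>) \<omega>))" by simp
    moreover have "continuous_on UNIV cis" by (auto intro!: continuous_intros)
    ultimately show "(\<lambda>\<omega>. cis (t * Z \<omega>)) \<in> borel_measurable M"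
      using borel_measurable_continuous_on[of cis "\<lambda>\<omega>. t * Z \<omega>" M] that by simp
  qed simp
  have "cmod ((\<integral>\<omega>. cis (t * X \<omega>) \<partial>M) - (\<integral>\<omega>. cis (t * Y \<omega>) \<partial>M))
      = cmod (\<integral>\<omega>. cis (t * X \<omega>) - cis (t * Y \<omega>) \<partial>M)"
    by (simp add: Bochner_Integration.integral_diff[OF ic[OF X] ic[OF Y]])
  also have "\<dots> \<le> (\<integral>\<omega>. cmod (cis (t * X \<omega>) - cis (t * Y \<omega>)) \<partial>M)"
    by (rule integral_norm_bound)
  also have "\<dots> \<le> (\<integral>\<omega>. \<bar>t\<bar> * e + 2 * indicator A \<omega> \<partial>M)"
  proof (rule integral_mono)
    show "integrable M (\<lambda>\<omega>. cmod (cis (t * X \<omega>) - cis (t * Y \<omega>)))"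
      using ic[OF X] ic[OF Y] by auto
    show "integrable M (\<lambda>\<omega>. \<bar>t\<bar> * e + 2 * indicator A \<omega>)"
      using A by (intro Bochner_Integration.integrable_add integrable_mult_right integrable_real_indicator) (auto simp: emeasure_eq_measure)
    fix \<omega> assume "\<omega> \<in> space M"
    show "cmod (cis (t * X \<omega>) - cis (t * Y \<omega>)) \<le> \<bar>t\<bar> * e + 2 * indicator A \<omega>"
    proof (cases "\<omega> \<in> A")
      case True
      have "0 \<le> \<bar>t\<bar> * e" using e by simp
      then show ?thesis using cis_diff_le2[of "t * X \<omega>" "t * Y \<omega>"] True by simp
    next
      case False
      with \<open>\<omega> \<in> space M\<close> have "\<bar>X \<omega> - Y \<omega>\<bar> \<le> e" by (auto simp: A_def)
      then have "\<bar>t * X \<omega> - t * Y \<omega>\<bar> \<le> \<bar>t\<bar> * e"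
        by (simp add: right_diff_distrib[symmetric] abs_mult mult_left_mono)
      then show ?thesis using cis_diff_le[of "t * X \<omega>" "t * Y \<omega>"] False by simp
    qed
  qed
  also have "\<dots> = \<bar>t\<bar> * e + 2 * measure M A"
  proof -
    have ii: "integrable M (indicator A :: 'a \<Rightarrow> real)"
      using A by (intro integrable_real_indicator) (auto simp: emeasure_eq_measure)
    have "(\<integral>\<omega>. \<bar>t\<bar> * e + 2 * indicator A \<omega> \<partial>M) = (\<integral>\<omega>. \<bar>t\<bar> * e \<partial>M) + (\<integral>\<omega>. 2 * indicator A \<omega> \<partial>M)"
      using ii by (intro Bochner_Integration.integral_add) auto
    also have "\<dots> = \<bar>t\<bar> * e + 2 * measure M A"
      using A by (simp add: prob_space)
    finally show ?thesis .
  qed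
  finally show ?thesis by (simp add: A_def)
qed

lemma char_conv:
  assumes P: "prob_space M"
    and X: "\<And>n. X n \<in> borel_measurable M" and Y: "Y \<in> borel_measurable M"
    and c: "conv_in_prob M X Y"
  shows "(\<lambda>n. \<integral>\<omega>. cis (t * X n \<omega>) \<partial>M) \<longlonglongrightarrow> (\<integral>\<omega>. cis (t * Y \<omega>) \<partial>M)"
proof (rule LIMSEQ_I)
  fix r :: real assume r: "r > 0"
  define e where "e = r / (2 * (\<bar>t\<bar> + 1))"
  have e: "e > 0" using r by (simp add: e_def)
  have te: "\<bar>t\<bar> * e < r / 2"
  proof -
    have "\<bar>t\<bar> * e = r / 2 * (\<bar>t\<bar> / (\<bar>t\<bar> + 1))" by (simp add: e_def field_simps)
    also have "\<dots> < r / 2 * 1" using r by (intro mult_strict_left_mono) auto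
    finally show ?thesis by simp
  qed
  from c e have "(\<lambda>n. measure M {\<omega> \<in> space M. \<bar>X n \<omega> - Y \<omega>\<bar> > e}) \<longlonglongrightarrow> 0"
    unfolding conv_in_prob_def by blast
  then obtain N where N: "\<And>n. n \<ge> N \<Longrightarrow> norm (measure M {\<omega> \<in> space M. \<bar>X n \<omega> - Y \<omega>\<bar> > e} - 0) < r / 4"
  proof -
    have "r / 4 > 0" using r by simp
    from LIMSEQ_D[OF \<open>(\<lambda>n. _) \<longlonglongrightarrow> 0\<close> this] show ?thesis using that by blast
  qed
  show "\<exists>no. \<forall>n\<ge>no. norm ((\<integral>\<omega>. cis (t * X n \<omega>) \<partial>M) - (\<integral>\<omega>. cis (t * Y \<omega>) \<partial>M)) < r"
  proof (intro exI allI impI)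
    fix n assume "n \<ge> N"
    then have "measure M {\<omega> \<in> space M. \<bar>X n \<omega> - Y \<omega>\<bar> > e} < r / 4" using N by simp
    then show "norm ((\<integral>\<omega>. cis (t * X n \<omega>) \<partial>M) - (\<integral>\<omega>. cis (t * Y \<omega>) \<partial>M)) < r"
      using char_diff_bound[OF P X[of n] Y e, of t] te by simp
  qed
qed

lemma char_near0:
  assumes P: "prob_space M" and Y: "Y \<in> borel_measurable M"
  shows "\<exists>\<delta>>0. \<forall>t. \<bar>t\<bar> \<le> \<delta> \<longrightarrow> cmod (\<integral>\<omega>. cis (t * Y \<omega>) \<partial>M) \<ge> 1/2"
proof -
  interpret prob_space M by fact
  define A where "A n = {\<omega> \<in> space M. \<bar>0 - Y \<omega>\<bar> > real n}" for n
  have "(\<lambda>n. measure M (A n)) \<longlonglongrightarrow> measure M (\<Inter>n. A n)"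
  proof (rule finite_Lim_measure_decseq)
    show "range A \<subseteq> sets M" unfolding A_def using Y by auto
    show "decseq A" unfolding A_def decseq_def by auto
  qed
  moreover have "(\<Inter>n. A n) = {}"
  proof safe
    fix \<omega> assume "\<omega> \<in> (\<Inter>n. A n)"
    moreover obtain n where "\<bar>Y \<omega>\<bar> < real n" using reals_Archimedean2 by blast
    ultimately show "\<omega> \<in> {}" unfolding A_def by (auto dest!: spec[of _ n])
  qed
  ultimately have "(\<lambda>n. measure M (A n)) \<longlonglongrightarrow> 0" by simp
  then obtain K where K: "measure M (A K) < 1/8"
  proof -
    have "(1/8::real) > 0" by simp
    from LIMSEQ_D[OF \<open>(\<lambda>n. _) \<longlonglongrightarrow> 0\<close> this] obtain no where "\<forall>n\<ge>no. norm (measure M (A n) - 0) < 1/8" by blast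
    then show ?thesis using that[of no] by simp
  qed
  define \<delta> where "\<delta> = 1 / (4 * (real K + 1))"
  have \<delta>: "\<delta> > 0" by (simp add: \<delta>_def)
  show ?thesis
  proof (intro exI[of _ \<delta>] conjI allI impI \<delta>)
    fix t :: real assume t: "\<bar>t\<bar> \<le> \<delta>"
    have b: "cmod ((\<integral>\<omega>. cis (t * 0) \<partial>M) - (\<integral>\<omega>. cis (t * Y \<omega>) \<partial>M))
      \<le> \<bar>t\<bar> * (real K + 1) + 2 * measure M {\<omega> \<in> space M. \<bar>0 - Y \<omega>\<bar> > real K + 1}"
      by (rule char_diff_bound[OF P _ Y]) auto
    have "measure M {\<omega> \<in> space M. \<bar>0 - Y \<omega>\<bar> > real K + 1} \<le> measure M (A K)"
      unfolding A_def by (rule finite_measure_mono) (use Y in auto)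
    moreover have "\<bar>t\<bar> * (real K + 1) \<le> 1/4"
      using t by (simp add: \<delta>_def field_simps)
    ultimately have "cmod (1 - (\<integral>\<omega>. cis (t * Y \<omega>) \<partial>M)) \<le> 1/2"
      using b K by (simp add: prob_space)
    then show "cmod (\<integral>\<omega>. cis (t * Y \<omega>) \<partial>M) \<ge> 1/2"
      using norm_triangle_ineq2[of 1 "\<integral>\<omega>. cis (t * Y \<omega>) \<partial>M"] by simp
  qed
qed

lemma levy_meas_borel:
  assumes "levy_measure \<nu>" "f \<in> borel_measurable borel"
  shows "f \<in> borel_measurable \<nu>"
proof -
  have "sets \<nu> = sets borel" using assms(1) by (simp add: levy_measure_def)
  then show ?thesis using assms(2) measurable_cong_sets[of \<nu> borel borel borel] by simp
qed

lemma levy_min_integrable: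
  assumes "levy_measure \<nu>"
  shows "integrable \<nu> (\<lambda>r. min 1 (r\<^sup>2))"
proof (rule integrableI_bounded)
  show "(\<lambda>r. min 1 (r\<^sup>2)) \<in> borel_measurable \<nu>"
    by (rule levy_meas_borel[OF assms]) simp
  have "(\<integral>\<^sup>+ r. ennreal (norm (min 1 (r\<^sup>2))) \<partial>\<nu>) = (\<integral>\<^sup>+ r. ennreal (min 1 (r\<^sup>2)) \<partial>\<nu>)"
    by (intro nn_integral_cong) simp
  then show "(\<integral>\<^sup>+ r. ennreal (norm (min 1 (r\<^sup>2))) \<partial>\<nu>) < \<infinity>"
    using assms by (simp add: levy_measure_def)
qed

lemma levy_integrand_bound:
  "cmod (cis (r * u) - 1 - \<i> * complex_of_real (r * u * indicator {x. \<bar>x\<bar> \<le> 1} r))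
     \<le> (2 + u\<^sup>2) * min 1 (r\<^sup>2)"
proof (cases "\<bar>r\<bar> \<le> 1")
  case True
  have "cmod (cis (r * u) - 1 - \<i> * complex_of_real (r * u * indicator {x. \<bar>x\<bar> \<le> 1} r))
      = cmod (iexp (r * u) - (\<Sum>k\<le>1. (\<i> * (r * u))^k / fact k))"
    using True by (simp add: cis_conv_exp algebra_simps)
  also have "\<dots> \<le> \<bar>r * u\<bar>^(Suc 1) / fact (Suc 1)"
    by (rule iexp_approx1)
  also have "\<dots> = r\<^sup>2 * u\<^sup>2 / 2" by (simp add: power_mult_distrib power2_eq_square)
  also have "\<dots> \<le> (2 + u\<^sup>2) * r\<^sup>2" by (simp add: field_simps)
  also have "\<dots> = (2 + u\<^sup>2) * min 1 (r\<^sup>2)"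
  proof -
    have "r\<^sup>2 \<le> 1" using True by (simp add: abs_square_le_1)
    then show ?thesis by (simp add: min_def)
  qed
  finally show ?thesis .
next
  case False
  then have r2: "r\<^sup>2 \<ge> 1" using abs_square_le_1[of r] by linarith
  have "cmod (cis (r * u) - 1 - \<i> * complex_of_real (r * u * indicator {x. \<bar>x\<bar> \<le> 1} r))
      = cmod (cis (r * u) - 1)"
    using False by simp
  also have "\<dots> \<le> cmod (cis (r * u)) + cmod (1::complex)" by (rule norm_triangle_ineq4)
  also have "\<dots> = 2" by simp
  also have "\<dots> \<le> (2 + u\<^sup>2) * min 1 (r\<^sup>2)" using r2 by (simp add: min_def)
  finally show ?thesis .
qed

lemma levy_Re:
  assumes lm: "levy_measure \<nu>" and a: "a \<ge> 0"
  shows "integrable \<nu> (\<lambda>r. 1 - cos (r * u))"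
    and "Re (levy_exponent a \<gamma> \<nu> u) \<le> - (\<integral>r. 1 - cos (r * u) \<partial>\<nu>)"
proof -
  define h where "h r = cis (r * u) - 1 - \<i> * complex_of_real (r * u * indicator {x. \<bar>x\<bar> \<le> 1} r)" for r
  have c1: "(\<lambda>r. cis (r * u)) \<in> borel_measurable borel"
    by (intro borel_measurable_continuous_onI continuous_intros)
  have c2: "(\<lambda>r::real. indicator {x. \<bar>x\<bar> \<le> 1} r :: real) \<in> borel_measurable borel"
  proof -
    have "{x::real. \<bar>x\<bar> \<le> 1} \<in> sets borel"
      by (intro borel_closed closed_Collect_le continuous_intros)
    then show ?thesis by simp
  qed
  have "h \<in> borel_measurable borel"
    unfolding h_def using c1 c2 by measurable
  then have hm: "h \<in> borel_measurable \<nu>"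
    by (rule levy_meas_borel[OF lm])
  have hi: "integrable \<nu> h"
  proof (rule Bochner_Integration.integrable_bound[OF _ hm])
    show "integrable \<nu> (\<lambda>r. (2 + u\<^sup>2) * min 1 (r\<^sup>2))"
      using levy_min_integrable[OF lm] by simp
    show "AE r in \<nu>. norm (h r) \<le> norm ((2 + u\<^sup>2) * min 1 (r\<^sup>2))"
      using levy_integrand_bound[of _ u] by (auto simp: h_def)
  qed
  have reh: "Re (h r) = - (1 - cos (r * u))" for r
    by (simp add: h_def cis.sel)
  have "integrable \<nu> (\<lambda>r. - Re (h r))"
    using integrable_Re[OF hi] by simp
  then show ii: "integrable \<nu> (\<lambda>r. 1 - cos (r * u))"
    by (simp add: reh)
  have le: "levy_exponent a \<gamma> \<nu> u = \<i> * complex_of_real (\<gamma> * u) - complex_of_real (a * u\<^sup>2 / 2) + integral\<^sup>L \<nu> h"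
    unfolding levy_exponent_def h_def[abs_def] ..
  have "Re (levy_exponent a \<gamma> \<nu> u) = - (a * u\<^sup>2 / 2) + Re (integral\<^sup>L \<nu> h)"
    unfolding le by simp
  also have "Re (integral\<^sup>L \<nu> h) = (\<integral>r. Re (h r) \<partial>\<nu>)"
    by (rule integral_Re[OF hi, symmetric])
  also have "\<dots> = (\<integral>r. - (1 - cos (r * u)) \<partial>\<nu>)"
    by (simp only: reh)
  also have "\<dots> = - (\<integral>r. 1 - cos (r * u) \<partial>\<nu>)"
    by (rule Bochner_Integration.integral_minus)
  finally show "Re (levy_exponent a \<gamma> \<nu> u) \<le> - (\<integral>r. 1 - cos (r * u) \<partial>\<nu>)"
    using a by simp
qed

lemma levy_empty:
  assumes "levy_basis M L a \<gamma> \<nu>"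
  shows "AE \<omega> in M. L {} \<omega> = 0"
proof -
  have "{} \<in> bounded_borel" by (simp add: bounded_borel_def)
  then have "AE \<omega> in M. (\<lambda>n. L {} \<omega>) sums L (\<Union>n::nat. {}) \<omega>"
    using assms unfolding levy_basis_def
    by (auto dest!: spec[of _ "\<lambda>_::nat. {}"] simp: disjoint_family_on_def)
  then show ?thesis
  proof (rule eventually_mono)
    fix \<omega> assume "(\<lambda>n::nat. L {} \<omega>) sums L (\<Union>n::nat. {}) \<omega>"
    then have "(\<lambda>n::nat. L {} \<omega>) \<longlonglongrightarrow> 0"
      by (intro summable_LIMSEQ_zero) (auto simp: sums_iff)
    then show "L {} \<omega> = 0" by (simp add: LIMSEQ_const_iff)
  qed
qed


definition nz :: "(real \<times> 'a set) list \<Rightarrow> (real \<times> 'a set) list" where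
  "nz ps = filter (\<lambda>p. snd p \<noteq> {}) ps"

lemma valid_nthD: "valid_simple ps \<Longrightarrow> i < length ps \<Longrightarrow> j < length ps \<Longrightarrow> i \<noteq> j \<Longrightarrow> snd (ps ! i) \<inter> snd (ps ! j) = {}"
  by (simp add: valid_simple_def)

lemma valid_simple_Cons:
  "valid_simple (p # ps) \<longleftrightarrow> snd p \<in> bounded_borel \<and> (\<forall>q\<in>set ps. snd p \<inter> snd q = {}) \<and> valid_simple ps"
proof
  assume v: "valid_simple (p # ps)"
  have "snd p \<inter> snd q = {}" if "q \<in> set ps" for q
  proof -
    from that obtain j where j: "j < length ps" "q = ps ! j" by (auto simp: in_set_conv_nth)
    then show ?thesis using valid_nthD[OF v, of 0 "Suc j"] by simp
  qed
  moreover have "valid_simple ps"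
    unfolding valid_simple_def
  proof (intro conjI allI impI ballI)
    fix q assume "q \<in> set ps" then show "snd q \<in> bounded_borel" using v by (auto simp: valid_simple_def)
  next
    fix i j assume "i < length ps" "j < length ps" "i \<noteq> j"
    then show "snd (ps ! i) \<inter> snd (ps ! j) = {}"
      using valid_nthD[OF v, of "Suc i" "Suc j"] by simp
  qed
  ultimately show "snd p \<in> bounded_borel \<and> (\<forall>q\<in>set ps. snd p \<inter> snd q = {}) \<and> valid_simple ps"
    using v by (auto simp: valid_simple_def)
next
  assume a: "snd p \<in> bounded_borel \<and> (\<forall>q\<in>set ps. snd p \<inter> snd q = {}) \<and> valid_simple ps"
  show "valid_simple (p # ps)"
    unfolding valid_simple_def
  proof (intro conjI allI impI ballI)
    fix q assume "q \<in> set (p # ps)" then show "snd q \<in> bounded_borel" using a by (auto simp: valid_simple_def)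
  next
    fix i j assume ij: "i < length (p # ps)" "j < length (p # ps)" "i \<noteq> j"
    show "snd ((p # ps) ! i) \<inter> snd ((p # ps) ! j) = {}"
    proof (cases i)
      case 0
      then obtain j' where "j = Suc j'" using ij by (cases j) auto
      then show ?thesis using 0 ij a by (auto simp: nth_mem)
    next
      case (Suc i')
      show ?thesis
      proof (cases j)
        case 0 then show ?thesis using Suc ij a by (auto simp: nth_mem)
      next
        case (Suc j') then show ?thesis using \<open>i = Suc i'\<close> ij a by (auto simp: valid_simple_def)
      qed
    qed
  qed
qed

lemma valid_disj:
  assumes "valid_simple ps" "p \<in> set ps" "q \<in> set ps" "snd p \<noteq> snd q"
  shows "snd p \<inter> snd q = {}"
proof -
  obtain i j where "i < length ps" "p = ps ! i" "j < length ps" "q = ps ! j"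
    using assms(2,3) by (auto simp: in_set_conv_nth)
  then show ?thesis using assms(1,4) unfolding valid_simple_def by (cases "i = j") auto
qed

lemma valid_bb: "valid_simple ps \<Longrightarrow> p \<in> set ps \<Longrightarrow> snd p \<in> bounded_borel"
  by (auto simp: valid_simple_def)

lemma distinct_nz: "valid_simple ps \<Longrightarrow> distinct (map snd (nz ps))"
proof (induction ps)
  case Nil then show ?case by (simp add: nz_def)
next
  case (Cons p ps)
  then have v: "valid_simple ps" and d: "\<forall>q\<in>set ps. snd p \<inter> snd q = {}"
    by (auto simp: valid_simple_Cons)
  have "snd p \<notin> snd ` set (nz ps)" if "snd p \<noteq> {}"
    using d that by (auto simp: nz_def)
  then show ?case using Cons.IH[OF v] by (auto simp: nz_def)
qed

lemma set_nz: "p \<in> set (nz ps) \<longleftrightarrow> p \<in> set ps \<and> snd p \<noteq> {}"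
  by (auto simp: nz_def)

lemma inj_nz: "valid_simple ps \<Longrightarrow> inj_on snd (set (nz ps))"
  using distinct_nz[of ps] by (simp add: distinct_map)

lemma distinct_nz': "valid_simple ps \<Longrightarrow> distinct (nz ps)"
  using distinct_nz[of ps] by (simp add: distinct_map)

lemma sfo_sum:
  assumes "valid_simple ps"
  shows "simple_fun_of ps x = (\<Sum>p\<in>set (nz ps). fst p * indicator (snd p) x)"
proof -
  have "simple_fun_of ps x = sum_list (map (\<lambda>p. fst p * indicator (snd p) x) ps)"
    by (simp add: simple_fun_of_def)
  also have "\<dots> = sum_list (map (\<lambda>p. fst p * indicator (snd p) x) (nz ps))"
    unfolding nz_def by (rule sum_list_map_filter[symmetric]) auto
  also have "\<dots> = (\<Sum>p\<in>set (nz ps). fst p * indicator (snd p) x)"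
    by (rule sum_list_distinct_conv_sum_set[OF distinct_nz'[OF assms]])
  finally show ?thesis .
qed

lemma sfo_apply:
  fixes h :: "real \<Rightarrow> 'b::comm_monoid_add"
  assumes v: "valid_simple ps" and h0: "h 0 = 0"
  shows "h (simple_fun_of ps x) = (\<Sum>p\<in>set (nz ps). if x \<in> snd p then h (fst p) else 0)"
proof (cases "\<exists>p\<in>set (nz ps). x \<in> snd p")
  case True
  then obtain p where p: "p \<in> set (nz ps)" "x \<in> snd p" by blast
  have other: "x \<notin> snd q" if "q \<in> set (nz ps)" "q \<noteq> p" for q
  proof -
    have "snd q \<noteq> snd p" using inj_nz[OF v] that p by (auto dest: inj_onD)
    then have "snd q \<inter> snd p = {}"
      using valid_disj[OF v] that p by (auto simp: set_nz)
    then show ?thesis using p by auto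
  qed
  have fin: "finite (set (nz ps))" by simp
  have "simple_fun_of ps x = (\<Sum>q\<in>set (nz ps). fst q * indicator (snd q) x)"
    by (rule sfo_sum[OF v])
  also have "\<dots> = fst p * indicator (snd p) x + (\<Sum>q\<in>set (nz ps) - {p}. fst q * indicator (snd q) x)"
    by (rule sum.remove[OF fin p(1)])
  also have "(\<Sum>q\<in>set (nz ps) - {p}. fst q * indicator (snd q) x) = 0"
    using other by (intro sum.neutral) auto
  finally have l: "simple_fun_of ps x = fst p" using p by simp
  have "(\<Sum>q\<in>set (nz ps). if x \<in> snd q then h (fst q) else 0)
      = (if x \<in> snd p then h (fst p) else 0) + (\<Sum>q\<in>set (nz ps) - {p}. if x \<in> snd q then h (fst q) else 0)"
    by (rule sum.remove[OF fin p(1)])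
  also have "(\<Sum>q\<in>set (nz ps) - {p}. if x \<in> snd q then h (fst q) else 0) = 0"
    using other by (intro sum.neutral) auto
  finally show ?thesis using l p by simp
next
  case False
  then have "simple_fun_of ps x = 0"
    by (simp add: sfo_sum[OF v] indicator_def)
  then show ?thesis using False h0 by (auto intro!: sum.neutral[symmetric])
qed


lemma cis_sum: "finite A \<Longrightarrow> cis (\<Sum>a\<in>A. f a) = (\<Prod>a\<in>A. cis (f a))"
  by (induction A rule: finite_induct) (auto simp: cis_mult[symmetric])

lemma levy_meas: "levy_basis M L a \<gamma> \<nu> \<Longrightarrow> S \<in> bounded_borel \<Longrightarrow> L S \<in> borel_measurable M"
  by (simp add: levy_basis_def)

lemma sint_meas:
  assumes LB: "levy_basis M L a \<gamma> \<nu>" and V: "valid_simple ps"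
  shows "simple_int L ps UNIV \<in> borel_measurable M"
  using V
proof (induction ps)
  case Nil then show ?case by (simp add: simple_int_def)
next
  case (Cons p ps)
  then have v: "valid_simple ps" and bb: "snd p \<in> bounded_borel" by (auto simp: valid_simple_Cons)
  have e: "simple_int L (p # ps) UNIV = (\<lambda>\<omega>. fst p * L (snd p) \<omega> + simple_int L ps UNIV \<omega>)"
    by (simp add: simple_int_def fun_eq_iff)
  show ?case unfolding e using Cons.IH[OF v] levy_meas[OF LB bb] by measurable
qed

lemma sint_sum:
  assumes LB: "levy_basis M L a \<gamma> \<nu>" and V: "valid_simple ps"
  shows "AE \<omega> in M. simple_int L ps UNIV \<omega> = (\<Sum>p\<in>set (nz ps). fst p * L (snd p) \<omega>)"
  using levy_empty[OF LB]
proof (rule eventually_mono)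
  fix \<omega> assume L0: "L {} \<omega> = 0"
  have "simple_int L ps UNIV \<omega> = sum_list (map (\<lambda>p. fst p * L (snd p) \<omega>) ps)"
    by (simp add: simple_int_def)
  also have "\<dots> = sum_list (map (\<lambda>p. fst p * L (snd p) \<omega>) (nz ps))"
    unfolding nz_def by (rule sum_list_map_filter[symmetric]) (auto simp: L0)
  also have "\<dots> = (\<Sum>p\<in>set (nz ps). fst p * L (snd p) \<omega>)"
    by (rule sum_list_distinct_conv_sum_set[OF distinct_nz'[OF V]])
  finally show "simple_int L ps UNIV \<omega> = (\<Sum>p\<in>set (nz ps). fst p * L (snd p) \<omega>)" .
qed

lemma cis_meas: "f \<in> borel_measurable M \<Longrightarrow> (\<lambda>\<omega>. cis (c * f \<omega>)) \<in> borel_measurable M"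
proof -
  assume f: "f \<in> borel_measurable M"
  have "continuous_on UNIV (\<lambda>v. cis (c * v))" by (auto intro!: continuous_intros)
  then show ?thesis using borel_measurable_continuous_on[of "\<lambda>v. cis (c * v)" f M] f by simp
qed

lemma simple_char:
  assumes P: "prob_space M" and LB: "levy_basis M L a \<gamma> \<nu>" and V: "valid_simple ps"
  shows "(\<integral>\<omega>. cis (s * simple_int L ps UNIV \<omega>) \<partial>M)
    = (\<Prod>p\<in>set (nz ps). exp (complex_of_real (measure lebesgue (snd p)) * levy_exponent a \<gamma> \<nu> (s * fst p)))"
proof -
  interpret prob_space M by fact
  define Q where "Q = set (nz ps)"
  define A where "A = snd ` Q"
  define g where "g = the_inv_into Q snd"
  have inj: "inj_on snd Q" unfolding Q_def by (rule inj_nz[OF V])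
  have gp: "g (snd p) = p" if "p \<in> Q" for p
    unfolding g_def using the_inv_into_f_f[OF inj that] .
  have gS: "g S \<in> Q" "snd (g S) = S" if "S \<in> A" for S
    using that gp unfolding A_def by auto
  have finA: "finite A" unfolding A_def Q_def by simp
  have bbA: "A \<subseteq> bounded_borel"
    unfolding A_def Q_def using valid_bb[OF V] by (auto simp: set_nz)
  have disjA: "disjoint A"
    unfolding disjoint_def A_def Q_def using valid_disj[OF V] by (auto simp: set_nz)
  have indL: "indep_vars (\<lambda>_. borel) L A"
    using LB finA bbA disjA unfolding levy_basis_def by blast
  define Z where "Z S \<omega> = cis (s * fst (g S) * L S \<omega>)" for S \<omega>
  have Lm: "L S \<in> borel_measurable M" if "S \<in> A" for S
    using levy_meas[OF LB] bbA that by auto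
  have Zm: "Z S \<in> borel_measurable M" if "S \<in> A" for S
    unfolding Z_def using cis_meas[OF Lm[OF that], of "s * fst (g S)"] by (simp add: mult.assoc)
  have indZ: "indep_vars (\<lambda>_. borel) Z A"
  proof -
    have "indep_vars (\<lambda>_. borel) (\<lambda>S \<omega>. (\<lambda>v. cis (s * fst (g S) * v)) (L S \<omega>)) A"
    proof (rule indep_vars_compose2[OF indL])
      fix S assume "S \<in> A"
      have "continuous_on UNIV (\<lambda>v. cis (s * fst (g S) * v))" by (auto intro!: continuous_intros)
      then show "(\<lambda>v. cis (s * fst (g S) * v)) \<in> borel \<rightarrow>\<^sub>M borel"
        by (rule borel_measurable_continuous_onI)
    qed
    then show ?thesis unfolding Z_def[abs_def] by simp
  qed
  have Zi: "integrable M (Z S)" if "S \<in> A" for S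
    by (rule integrable_const_bound[where B=1]) (auto simp: Z_def Zm[OF that])
  have AEeq: "AE \<omega> in M. cis (s * simple_int L ps UNIV \<omega>) = (\<Prod>S\<in>A. Z S \<omega>)"
    using sint_sum[OF LB V]
  proof (rule eventually_mono)
    fix \<omega> assume e: "simple_int L ps UNIV \<omega> = (\<Sum>p\<in>set (nz ps). fst p * L (snd p) \<omega>)"
    have "cis (s * simple_int L ps UNIV \<omega>) = cis (\<Sum>p\<in>Q. s * fst p * L (snd p) \<omega>)"
      unfolding e Q_def by (simp add: sum_distrib_left mult.assoc)
    also have "\<dots> = (\<Prod>p\<in>Q. cis (s * fst p * L (snd p) \<omega>))"
      by (rule cis_sum) (simp add: Q_def)
    also have "\<dots> = (\<Prod>p\<in>Q. Z (snd p) \<omega>)"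
      by (intro prod.cong) (auto simp: Z_def gp)
    also have "\<dots> = (\<Prod>S\<in>A. Z S \<omega>)"
      unfolding A_def by (rule prod.reindex[OF inj, symmetric, unfolded comp_def])
    finally show "cis (s * simple_int L ps UNIV \<omega>) = (\<Prod>S\<in>A. Z S \<omega>)" .
  qed
  have "(\<integral>\<omega>. cis (s * simple_int L ps UNIV \<omega>) \<partial>M) = (\<integral>\<omega>. (\<Prod>S\<in>A. Z S \<omega>) \<partial>M)"
  proof (rule integral_cong_AE)
    show "(\<lambda>\<omega>. cis (s * simple_int L ps UNIV \<omega>)) \<in> borel_measurable M"
      by (rule cis_meas[OF sint_meas[OF LB V]])
    show "(\<lambda>\<omega>. \<Prod>S\<in>A. Z S \<omega>) \<in> borel_measurable M"
      using Zm by (intro borel_measurable_prod) auto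
  qed (rule AEeq)
  also have "\<dots> = (\<Prod>S\<in>A. \<integral>\<omega>. Z S \<omega> \<partial>M)"
    by (rule indep_vars_lebesgue_integral[OF finA indZ Zi])
  also have "\<dots> = (\<Prod>S\<in>A. exp (complex_of_real (measure lebesgue S) * levy_exponent a \<gamma> \<nu> (s * fst (g S))))"
  proof (rule prod.cong[OF refl])
    fix S assume "S \<in> A"
    then have "S \<in> bounded_borel" using bbA by auto
    then show "(\<integral>\<omega>. Z S \<omega> \<partial>M) = exp (complex_of_real (measure lebesgue S) * levy_exponent a \<gamma> \<nu> (s * fst (g S)))"
      using LB unfolding levy_basis_def Z_def by blast
  qed
  also have "\<dots> = (\<Prod>p\<in>Q. exp (complex_of_real (measure lebesgue (snd p)) * levy_exponent a \<gamma> \<nu> (s * fst p)))"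
    unfolding A_def by (subst prod.reindex[OF inj]) (auto simp: gp intro!: prod.cong)
  finally show ?thesis by (simp add: Q_def)
qed


lemma simple_char_bound:
  fixes ps :: "(real \<times> 'a::euclidean_space set) list"
  assumes P: "prob_space M" and LB: "levy_basis M L a \<gamma> \<nu>" and V: "valid_simple ps"
    and lm: "levy_measure \<nu>" and a: "a \<ge> 0"
  shows "(\<Sum>p\<in>set (nz ps). measure lebesgue (snd p) * (\<integral>r. 1 - cos (r * (s * fst p)) \<partial>\<nu>))
     \<le> - ln (cmod (\<integral>\<omega>. cis (s * simple_int L ps UNIV \<omega>) \<partial>M))"
proof -
  define Q where "Q = set (nz ps)"
  define I where "I p = (\<integral>r. 1 - cos (r * (s * fst p)) \<partial>\<nu>)" for p :: "real \<times> 'a set"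
  have "cmod (\<integral>\<omega>. cis (s * simple_int L ps UNIV \<omega>) \<partial>M)
      = cmod (\<Prod>p\<in>Q. exp (complex_of_real (measure lebesgue (snd p)) * levy_exponent a \<gamma> \<nu> (s * fst p)))"
    unfolding simple_char[OF P LB V] Q_def ..
  also have "\<dots> = (\<Prod>p\<in>Q. cmod (exp (complex_of_real (measure lebesgue (snd p)) * levy_exponent a \<gamma> \<nu> (s * fst p))))"
    by (rule prod_norm[symmetric])
  also have "\<dots> = (\<Prod>p\<in>Q. exp (measure lebesgue (snd p) * Re (levy_exponent a \<gamma> \<nu> (s * fst p))))"
    by (intro prod.cong refl) (simp add: norm_exp_eq_Re)
  also have "\<dots> = exp (\<Sum>p\<in>Q. measure lebesgue (snd p) * Re (levy_exponent a \<gamma> \<nu> (s * fst p)))"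
    by (simp add: exp_sum Q_def)
  also have "\<dots> \<le> exp (\<Sum>p\<in>Q. - (measure lebesgue (snd p) * I p))"
  proof (intro exp_mono sum_mono)
    fix p
    have "Re (levy_exponent a \<gamma> \<nu> (s * fst p)) \<le> - I p"
      unfolding I_def by (rule levy_Re(2)[OF lm a])
    then show "measure lebesgue (snd p) * Re (levy_exponent a \<gamma> \<nu> (s * fst p)) \<le> - (measure lebesgue (snd p) * I p)"
      using mult_left_mono[of _ "- I p" "measure lebesgue (snd p)"] by simp
  qed
  finally have "cmod (\<integral>\<omega>. cis (s * simple_int L ps UNIV \<omega>) \<partial>M) \<le> exp (- (\<Sum>p\<in>Q. measure lebesgue (snd p) * I p))"
    by (simp add: sum_negf)
  moreover have "cmod (\<integral>\<omega>. cis (s * simple_int L ps UNIV \<omega>) \<partial>M) > 0"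
    unfolding simple_char[OF P LB V] by (simp add: prod_norm[symmetric] prod_pos)
  ultimately have "ln (cmod (\<integral>\<omega>. cis (s * simple_int L ps UNIV \<omega>) \<partial>M)) \<le> - (\<Sum>p\<in>Q. measure lebesgue (snd p) * I p)"
    by (metis ln_exp ln_le_cancel_iff exp_gt_zero)
  then show ?thesis by (simp add: Q_def I_def)
qed

lemma emeasure_lborel_bb:
  assumes "S \<in> bounded_borel"
  shows "emeasure lborel S = ennreal (measure lebesgue S)"
proof -
  have S: "S \<in> sets borel" "bounded S" using assms by (auto simp: bounded_borel_def)
  have "emeasure lborel S = ennreal (measure lborel S)"
    using emeasure_bounded_finite[OF S(2)] by (simp add: emeasure_eq_ennreal_measure)
  also have "measure lborel S = measure lebesgue S"
    using S by simp
  finally show ?thesis .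
qed

lemma phi_integral:
  assumes V: "valid_simple ps" and lm: "levy_measure \<nu>"
  shows "(\<integral>\<^sup>+ r. \<integral>\<^sup>+ x. ennreal (1 - cos (s * simple_fun_of ps x * r)) \<partial>lborel \<partial>\<nu>)
    = ennreal (\<Sum>p\<in>set (nz ps). measure lebesgue (snd p) * (\<integral>r. 1 - cos (r * (s * fst p)) \<partial>\<nu>))"
proof -
  define Q where "Q = set (nz ps)"
  have bb: "snd p \<in> bounded_borel" if "p \<in> Q" for p
    using valid_bb[OF V] that by (auto simp: Q_def set_nz)
  have sb: "snd p \<in> sets lborel" if "p \<in> Q" for p
    using bb[OF that] by (simp add: bounded_borel_def)
  have inner: "(\<integral>\<^sup>+ x. ennreal (1 - cos (s * simple_fun_of ps x * r)) \<partial>lborel)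
      = (\<Sum>p\<in>Q. ennreal (measure lebesgue (snd p)) * ennreal (1 - cos (r * (s * fst p))))" for r
  proof -
    have "(\<integral>\<^sup>+ x. ennreal (1 - cos (s * simple_fun_of ps x * r)) \<partial>lborel)
        = (\<integral>\<^sup>+ x. (\<Sum>p\<in>Q. ennreal (1 - cos (s * fst p * r)) * indicator (snd p) x) \<partial>lborel)"
    proof (rule nn_integral_cong)
      fix x
      have "ennreal (1 - cos (s * simple_fun_of ps x * r))
          = (\<Sum>p\<in>Q. if x \<in> snd p then ennreal (1 - cos (s * fst p * r)) else 0)"
        unfolding Q_def using sfo_apply[OF V, of "\<lambda>v. ennreal (1 - cos (s * v * r))" x] by simp
      also have "\<dots> = (\<Sum>p\<in>Q. ennreal (1 - cos (s * fst p * r)) * indicator (snd p) x)"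
        by (intro sum.cong refl) (auto simp: indicator_def)
      finally show "ennreal (1 - cos (s * simple_fun_of ps x * r))
          = (\<Sum>p\<in>Q. ennreal (1 - cos (s * fst p * r)) * indicator (snd p) x)" .
    qed
    also have "\<dots> = (\<Sum>p\<in>Q. \<integral>\<^sup>+ x. ennreal (1 - cos (s * fst p * r)) * indicator (snd p) x \<partial>lborel)"
      using sb by (intro nn_integral_sum) auto
    also have "\<dots> = (\<Sum>p\<in>Q. ennreal (1 - cos (s * fst p * r)) * emeasure lborel (snd p))"
      using sb by (intro sum.cong refl nn_integral_cmult_indicator) auto
    also have "\<dots> = (\<Sum>p\<in>Q. ennreal (measure lebesgue (snd p)) * ennreal (1 - cos (r * (s * fst p))))"
      using bb by (intro sum.cong refl) (auto simp: emeasure_lborel_bb mult.commute mult.left_commute)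
    finally show ?thesis .
  qed
  have wm: "(\<lambda>r. ennreal (1 - cos (r * (s * fst p)))) \<in> borel_measurable \<nu>" for p
    by (rule levy_meas_borel[OF lm]) simp
  have "(\<integral>\<^sup>+ r. \<integral>\<^sup>+ x. ennreal (1 - cos (s * simple_fun_of ps x * r)) \<partial>lborel \<partial>\<nu>)
      = (\<integral>\<^sup>+ r. (\<Sum>p\<in>Q. ennreal (measure lebesgue (snd p)) * ennreal (1 - cos (r * (s * fst p)))) \<partial>\<nu>)"
    by (simp only: inner)
  also have "\<dots> = (\<Sum>p\<in>Q. \<integral>\<^sup>+ r. ennreal (measure lebesgue (snd p)) * ennreal (1 - cos (r * (s * fst p))) \<partial>\<nu>)"
    using wm by (intro nn_integral_sum) auto
  also have "\<dots> = (\<Sum>p\<in>Q. ennreal (measure lebesgue (snd p)) * \<integral>\<^sup>+ r. ennreal (1 - cos (r * (s * fst p))) \<partial>\<nu>)"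
    using wm by (intro sum.cong refl nn_integral_cmult) auto
  also have "\<dots> = (\<Sum>p\<in>Q. ennreal (measure lebesgue (snd p)) * ennreal (\<integral>r. 1 - cos (r * (s * fst p)) \<partial>\<nu>))"
    using levy_Re(1)[OF lm order_refl] by (intro sum.cong refl arg_cong2[where f="(*)"] nn_integral_eq_integral) auto
  also have "\<dots> = (\<Sum>p\<in>Q. ennreal (measure lebesgue (snd p) * (\<integral>r. 1 - cos (r * (s * fst p)) \<partial>\<nu>)))"
    by (intro sum.cong refl ennreal_mult''[symmetric]) simp
  also have "\<dots> = ennreal (\<Sum>p\<in>Q. measure lebesgue (snd p) * (\<integral>r. 1 - cos (r * (s * fst p)) \<partial>\<nu>))"
    by (intro sum_ennreal mult_nonneg_nonneg integral_nonneg_AE) auto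
  finally show ?thesis by (simp add: Q_def)
qed

lemma cos_pow2: "1 - cos (2^k * v) \<le> 4^k * (1 - cos (v::real))"
proof (induction k)
  case 0 then show ?case by simp
next
  case (Suc k)
  define w where "w = 2^k * v"
  have "1 - cos (2 * w) = 2 * (1 - cos w) * (1 + cos w)"
    using cos_double_cos[of w] by (simp add: power2_eq_square algebra_simps)
  also have "\<dots> \<le> 2 * (1 - cos w) * 2"
    by (intro mult_left_mono) auto
  also have "\<dots> = 4 * (1 - cos w)" by simp
  also have "\<dots> \<le> 4 * (4^k * (1 - cos v))"
    using Suc.IH by (simp add: w_def)
  finally show ?case by (simp add: w_def mult.assoc)
qed

lemma tavg:
  assumes u: "1 \<le> \<bar>u\<bar>"
  shows "1 \<le> (\<integral>\<^sup>+ t. ennreal (indicator {0..2} t * (1 - cos (t * u))) \<partial>lborel)"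
proof -
  have u0: "u \<noteq> 0" using u by auto
  have "((\<lambda>t. 1 - cos (t * u)) has_integral ((2 - sin (2 * u) / u) - (0 - sin (0 * u) / u))) {0..2::real}"
  proof (rule fundamental_theorem_of_calculus)
    fix t :: real assume "t \<in> {0..2}"
    have "((\<lambda>t. t - sin (t * u) / u) has_real_derivative (1 - cos (t * u) * u / u)) (at t)"
      by (auto intro!: derivative_eq_intros)
    then show "((\<lambda>t. t - sin (t * u) / u) has_vector_derivative (1 - cos (t * u))) (at t within {0..2})"
      using u0 by (simp add: has_real_derivative_iff_has_vector_derivative[symmetric] has_field_derivative_at_within)
  qed simp
  then have "(\<integral>\<^sup>+ t. ennreal (indicator {0..2} t * (1 - cos (t * u))) \<partial>lborel) = ennreal (2 - sin (2 * u) / u)"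
    by (intro nn_integral_has_integral_lebesgue) auto
  moreover have "sin (2 * u) / u \<le> 1"
  proof -
    have "\<bar>sin (2 * u) / u\<bar> = \<bar>sin (2 * u)\<bar> / \<bar>u\<bar>" by (simp add: abs_divide)
    also have "\<dots> \<le> 1 / \<bar>u\<bar>" using u0 by (intro divide_right_mono) auto
    also have "\<dots> \<le> 1" using u by simp
    finally show ?thesis by linarith
  qed
  ultimately show ?thesis by (simp add: ennreal_1[symmetric] del: ennreal_1)
qed

lemma conv_abs_ge:
  fixes G :: "real^'n \<Rightarrow> real"
  assumes li: "locally_integrable G"
    and sgn: "(AE x in lebesgue. G x \<ge> 0) \<or> (AE x in lebesgue. G x \<le> 0)"
    and R: "R > 0"
  shows "\<bar>convol G (bump (R + 1)) x\<bar> \<ge> ball_avg G R x"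
proof (cases "AE x in lebesgue. G x \<ge> 0")
  case True
  then show ?thesis using conv_ge[OF li True R refl, of x] abs_ge_self[of "convol G (bump (R + 1)) x"] by linarith
next
  case False
  with sgn have neg: "AE x in lebesgue. G x \<le> 0" by blast
  have li': "locally_integrable (\<lambda>x. - G x)"
    using li unfolding locally_integrable_def set_integrable_def by auto
  have pos': "AE x in lebesgue. - G x \<ge> 0" using neg by (rule eventually_mono) simp
  have "convol (\<lambda>x. - G x) (bump (R + 1)) x = - convol G (bump (R + 1)) x"
    by (simp add: convol_def)
  moreover have "ball_avg (\<lambda>x. - G x) R x = ball_avg G R x"
    by (simp add: ball_avg_def)
  ultimately show ?thesis using conv_ge[OF li' pos' R refl, of x] by linarith
qed

lemma sfo_meas:
  assumes V: "valid_simple ps"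
  shows "simple_fun_of ps \<in> borel_measurable borel"
proof -
  have eq: "simple_fun_of ps = (\<lambda>x. \<Sum>p\<in>set (nz ps). fst p * indicator (snd p) x)"
    using sfo_sum[OF V] by (intro ext) blast
  have sb: "snd p \<in> sets borel" if "p \<in> set (nz ps)" for p
    using valid_bb[OF V] that by (auto simp: set_nz bounded_borel_def)
  have "(\<lambda>x. fst p * indicator (snd p) x :: real) \<in> borel_measurable borel" if "p \<in> set (nz ps)" for p
    using sb[OF that] by measurable
  then show ?thesis unfolding eq by (intro borel_measurable_sum)
qed


lemma meas_sets_cong:
  assumes "sets A = sets A'" "f \<in> borel_measurable A'"
  shows "f \<in> borel_measurable A"
  using assms measurable_cong_sets[of A A' borel borel] by simp

lemma sets_levy: "levy_measure \<nu> \<Longrightarrow> sets \<nu> = sets borel"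
  by (simp add: levy_measure_def)

lemma bm_lborel: "g \<in> borel_measurable borel \<Longrightarrow> g \<in> borel_measurable lborel"
  by (rule meas_sets_cong[of lborel borel]) simp_all

theorem corollary3p9:
  fixes G :: "real^'n \<Rightarrow> real"
    and M :: "'w measure"
    and Ldot :: "(real^'n \<Rightarrow> real) \<Rightarrow> 'w \<Rightarrow> real"
    and L :: "(real^'n) set \<Rightarrow> 'w \<Rightarrow> real"
    and s :: "(real^'n \<Rightarrow> real) \<Rightarrow> 'w \<Rightarrow> real"
    and a \<gamma> :: real and \<nu> :: "real measure"
  assumes "prob_space M"
    and "a \<ge> 0" and "levy_measure \<nu>"
    and "locally_integrable G"
    and "(AE x in lebesgue. G x \<ge> 0) \<or> (AE x in lebesgue. G x \<le> 0)"
    and "levy_white_noise M Ldot a \<gamma> \<nu>"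
    and "levy_basis M L a \<gamma> \<nu>"
    and "\<forall>\<phi> \<in> test_functions. rr_integral M L \<phi> (Ldot \<phi>)"
    and "gen_random_process M s"
    and "\<forall>\<phi> \<in> test_functions. rr_integral M L (convol G \<phi>) (s \<phi>)"
    and "R > 0"
  shows "(\<integral>\<^sup>+ r. indicator {r. \<bar>r\<bar> > 1} r * distrib_fun (ball_avg G R) (1 / \<bar>r\<bar>) \<partial>\<nu>) < \<infinity>"
proof -
  note P = assms(1) and a = assms(2) and lm = assms(3) and li = assms(4) and sgn = assms(5)
    and LB = assms(7) and R = assms(11)
  define \<phi> where "\<phi> = (bump (R + 1) :: real^'n \<Rightarrow> real)"
  have \<phi>test: "\<phi> \<in> test_functions" unfolding \<phi>_def by (rule bump_test)
  have "rr_integral M L (convol G \<phi>) (s \<phi>)" using assms(10) \<phi>test by blast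
  then obtain ps :: "nat \<Rightarrow> (real \<times> (real^'n) set) list" where
    V: "\<And>n. valid_simple (ps n)"
    and AEc: "AE x in lebesgue. (\<lambda>n. simple_fun_of (ps n) x) \<longlonglongrightarrow> convol G \<phi> x"
    and Ym: "s \<phi> \<in> borel_measurable M"
    and cp: "conv_in_prob M (\<lambda>n. simple_int L (ps n) UNIV) (s \<phi>)"
    unfolding rr_integral_def by blast
  define X where "X n = simple_int L (ps n) UNIV" for n
  have Xm: "X n \<in> borel_measurable M" for n unfolding X_def by (rule sint_meas[OF LB V])
  define f where "f x = lim (\<lambda>n. simple_fun_of (ps n) x)" for x
  have sfm: "simple_fun_of (ps n) \<in> borel_measurable borel" for n by (rule sfo_meas[OF V])
  have fm: "f \<in> borel_measurable borel"
    unfolding f_def[abs_def] by (rule borel_measurable_lim_metric[OF sfm])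
  have sfm'[measurable]: "simple_fun_of (ps n) \<in> borel_measurable lborel" for n by (rule bm_lborel[OF sfm])
  have fm'[measurable]: "f \<in> borel_measurable lborel" by (rule bm_lborel[OF fm])
  have AEf: "AE x in lborel. (\<lambda>n. simple_fun_of (ps n) x) \<longlonglongrightarrow> f x \<and> f x = convol G \<phi> x"
  proof -
    have "AE x in lebesgue. (\<lambda>n. simple_fun_of (ps n) x) \<longlonglongrightarrow> f x \<and> f x = convol G \<phi> x"
      using AEc by (rule eventually_mono) (auto simp: f_def limI)
    then show ?thesis by (simp add: AE_completion_iff)
  qed

  define cf where "cf n t = (\<integral>\<omega>. cis (t * X n \<omega>) \<partial>M)" for n t
  define cY where "cY t = (\<integral>\<omega>. cis (t * s \<phi> \<omega>) \<partial>M)" for t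
  have cconv: "(\<lambda>n. cf n t) \<longlonglongrightarrow> cY t" for t
    unfolding cf_def cY_def by (rule char_conv[OF P Xm Ym]) (use cp in \<open>simp add: X_def[abs_def]\<close>)
  obtain \<delta> where \<delta>: "\<delta> > 0" "\<And>t. \<bar>t\<bar> \<le> \<delta> \<Longrightarrow> cmod (cY t) \<ge> 1/2"
    using char_near0[OF P Ym] unfolding cY_def by blast
  obtain k :: nat where k: "2 / \<delta> < 2^k" using real_arch_pow[of 2 "2/\<delta>"] by auto
  define C where "C = 4^k * ln (3::real)"
  define I where "I n t = (\<Sum>p\<in>set (nz (ps n)). measure lebesgue (snd p) * (\<integral>r. 1 - cos (r * (t * fst p)) \<partial>\<nu>))" for n t

  have Ibound: "I n t \<le> C" if t: "t > 0" and c3: "cmod (cf n (t / 2^k)) > 1/3" for n t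
  proof -
    define s0 where "s0 = t / 2^k"
    have "I n s0 \<le> - ln (cmod (cf n s0))"
      unfolding I_def cf_def X_def by (rule simple_char_bound[OF P LB V lm a])
    also have "\<dots> < ln 3"
    proof -
      have "ln (1/3) < ln (cmod (cf n s0))"
        using c3 by (subst ln_less_cancel_iff) (auto simp: s0_def)
      then show ?thesis by (simp add: ln_div)
    qed
    finally have l3: "I n s0 < ln 3" .
    have "I n t \<le> (\<Sum>p\<in>set (nz (ps n)). measure lebesgue (snd p) * (4^k * (\<integral>r. 1 - cos (r * (s0 * fst p)) \<partial>\<nu>)))"
      unfolding I_def
    proof (intro sum_mono mult_left_mono)
      fix p :: "real \<times> (real^'n) set"
      have "(\<integral>r. 1 - cos (r * (t * fst p)) \<partial>\<nu>) \<le> (\<integral>r. 4^k * (1 - cos (r * (s0 * fst p))) \<partial>\<nu>)"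
      proof (rule integral_mono)
        show "integrable \<nu> (\<lambda>r. 1 - cos (r * (t * fst p)))" by (rule levy_Re(1)[OF lm order_refl])
        show "integrable \<nu> (\<lambda>r. 4^k * (1 - cos (r * (s0 * fst p))))"
          using levy_Re(1)[OF lm order_refl] by simp
        fix r
        have "r * (t * fst p) = 2^k * (r * (s0 * fst p))" by (simp add: s0_def)
        then show "1 - cos (r * (t * fst p)) \<le> 4^k * (1 - cos (r * (s0 * fst p)))"
          using cos_pow2[of k "r * (s0 * fst p)"] by (simp only:)
      qed
      then show "(\<integral>r. 1 - cos (r * (t * fst p)) \<partial>\<nu>) \<le> 4^k * (\<integral>r. 1 - cos (r * (s0 * fst p)) \<partial>\<nu>)"
        by simp
    qed simp
    also have "\<dots> = 4^k * I n s0"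
      unfolding I_def by (simp add: sum_distrib_left mult_ac)
    also have "\<dots> \<le> C"
      using l3 by (simp add: C_def)
    finally show ?thesis .
  qed

  have evI: "eventually (\<lambda>n. I n t \<le> C) sequentially" if t: "0 < t" "t \<le> 2" for t
  proof -
    define s0 where "s0 = t / 2^k"
    have "2 / 2^k < \<delta>" using k \<delta>(1) by (simp add: field_simps)
    moreover have "s0 \<le> 2 / 2^k" using t by (simp add: s0_def divide_right_mono)
    ultimately have "\<bar>s0\<bar> \<le> \<delta>" using t by (simp add: s0_def)
    then have "cmod (cY s0) > 1/3" using \<delta>(2) by fastforce
    moreover have "(\<lambda>n. cmod (cf n s0)) \<longlonglongrightarrow> cmod (cY s0)" by (intro tendsto_norm cconv)
    ultimately have "eventually (\<lambda>n. cmod (cf n s0) > 1/3) sequentially"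
      by (intro order_tendstoD(1)) auto
    then show ?thesis
      by (rule eventually_mono) (use t Ibound in \<open>auto simp: s0_def\<close>)
  qed

  have gI: "(\<integral>\<^sup>+ r. \<integral>\<^sup>+ x. ennreal (1 - cos (t * simple_fun_of (ps n) x * r)) \<partial>lborel \<partial>\<nu>) = ennreal (I n t)" for n t
    unfolding I_def by (rule phi_integral[OF V lm])

  define \<Psi> where "\<Psi> t r = (\<integral>\<^sup>+ x. ennreal (1 - cos (t * f x * r)) \<partial>lborel)" for t r

  have fatou: "(\<integral>\<^sup>+ r. \<Psi> t r \<partial>\<nu>) \<le> ennreal C" if t: "0 \<le> t" "t \<le> 2" for t
  proof (cases "t = 0")
    case True
    then show ?thesis by (simp add: \<Psi>_def)
  next
    case False
    with t have tpos: "0 < t" by simp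
    define u where "u n r x = ennreal (1 - cos (t * simple_fun_of (ps n) x * r))" for n r x
    have inner: "\<Psi> t r \<le> liminf (\<lambda>n. \<integral>\<^sup>+ x. u n r x \<partial>lborel)" for r
    proof -
      have "\<Psi> t r = (\<integral>\<^sup>+ x. liminf (\<lambda>n. u n r x) \<partial>lborel)"
        unfolding \<Psi>_def
      proof (rule nn_integral_cong_AE)
        show "AE x in lborel. ennreal (1 - cos (t * f x * r)) = liminf (\<lambda>n. u n r x)"
          using AEf
        proof (rule eventually_mono)
          fix x assume "(\<lambda>n. simple_fun_of (ps n) x) \<longlonglongrightarrow> f x \<and> f x = convol G \<phi> x"
          then have "(\<lambda>n. u n r x) \<longlonglongrightarrow> ennreal (1 - cos (t * f x * r))"
            unfolding u_def by (intro tendsto_ennrealI tendsto_intros) auto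
          then show "ennreal (1 - cos (t * f x * r)) = liminf (\<lambda>n. u n r x)"
            by (simp add: lim_imp_Liminf)
        qed
      qed
      also have "\<dots> \<le> liminf (\<lambda>n. \<integral>\<^sup>+ x. u n r x \<partial>lborel)"
        by (rule nn_integral_liminf) (simp add: u_def)
      finally show ?thesis .
    qed
    have um: "(\<lambda>r. \<integral>\<^sup>+ x. u n r x \<partial>lborel) \<in> borel_measurable \<nu>" for n
    proof -
      have "(\<lambda>(r, x). u n r x) \<in> borel_measurable (borel \<Otimes>\<^sub>M lborel)"
        unfolding u_def by measurable
      then have "(\<lambda>(r, x). u n r x) \<in> borel_measurable (\<nu> \<Otimes>\<^sub>M lborel)"
        by (rule meas_sets_cong[rotated]) (simp add: sets_levy[OF lm] cong: sets_pair_measure_cong)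
      from lborel.borel_measurable_nn_integral_fst[OF this] show ?thesis by simp
    qed
    have "(\<integral>\<^sup>+ r. \<Psi> t r \<partial>\<nu>) \<le> (\<integral>\<^sup>+ r. liminf (\<lambda>n. \<integral>\<^sup>+ x. u n r x \<partial>lborel) \<partial>\<nu>)"
      by (intro nn_integral_mono inner)
    also have "\<dots> \<le> liminf (\<lambda>n. \<integral>\<^sup>+ r. \<integral>\<^sup>+ x. u n r x \<partial>lborel \<partial>\<nu>)"
      by (rule nn_integral_liminf[OF um])
    also have "\<dots> = liminf (\<lambda>n. ennreal (I n t))"
      by (simp add: u_def gI)
    also have "\<dots> \<le> ennreal C"
    proof (rule Liminf_le)
      show "eventually (\<lambda>n. ennreal (I n t) \<le> ennreal C) sequentially"
        using evI[OF tpos t(2)] by (rule eventually_mono) (rule ennreal_leI)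
    qed simp
    finally show ?thesis .
  qed
  define J where "J = {r::real. \<bar>r\<bar> > 1}"
  have Jb: "J \<in> sets borel"
    unfolding J_def by measurable
  have Jm[measurable]: "(\<lambda>r. indicator J r :: ennreal) \<in> borel_measurable \<nu>"
    by (rule levy_meas_borel[OF lm]) (use Jb in simp)
  define \<nu>1 where "\<nu>1 = density \<nu> (indicator J)"
  have sets1: "sets \<nu>1 = sets borel" by (simp add: \<nu>1_def sets_levy[OF lm])
  have fin1: "emeasure \<nu> J < \<infinity>"
  proof -
    have "emeasure \<nu> J = (\<integral>\<^sup>+ r. indicator J r \<partial>\<nu>)"
      using Jb sets_levy[OF lm] by simp
    also have "\<dots> \<le> (\<integral>\<^sup>+ r. ennreal (min 1 (r\<^sup>2)) \<partial>\<nu>)"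
    proof (rule nn_integral_mono)
      fix r show "indicator J r \<le> ennreal (min 1 (r\<^sup>2))"
      proof (cases "r \<in> J")
        case True
        then have "1 \<le> r\<^sup>2" unfolding J_def using abs_square_le_1[of r] by auto
        then show ?thesis using True by (simp add: min_def)
      qed simp
    qed
    also have "\<dots> < \<infinity>" using lm by (simp add: levy_measure_def)
    finally show ?thesis .
  qed
  have "finite_measure \<nu>1"
  proof (rule finite_measureI)
    have "emeasure \<nu>1 (space \<nu>1) = (\<integral>\<^sup>+ r. indicator J r \<partial>\<nu>)"
      unfolding \<nu>1_def by (simp add: emeasure_density)
    also have "\<dots> = emeasure \<nu> J" using Jb sets_levy[OF lm] by simp
    finally show "emeasure \<nu>1 (space \<nu>1) \<noteq> \<infinity>" using fin1 by simp
  qed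
  then have psf: "pair_sigma_finite \<nu>1 lborel"
    unfolding pair_sigma_finite_def
    using finite_measure.sigma_finite_measure lborel.sigma_finite_measure_axioms by blast

  define F where "F r t = ennreal (indicator {0..2} t) * \<Psi> t r" for r t
  have Fm: "(\<lambda>(r, t). F r t) \<in> borel_measurable (\<nu>1 \<Otimes>\<^sub>M lborel)"
  proof -
    have "(\<lambda>y. ennreal (1 - cos (snd (fst y) * f (snd y) * fst (fst y)))) \<in> borel_measurable ((borel \<Otimes>\<^sub>M lborel) \<Otimes>\<^sub>M lborel)"
      by measurable
    then have "(\<lambda>y. ennreal (1 - cos (snd (fst y) * f (snd y) * fst (fst y)))) \<in> borel_measurable ((\<nu>1 \<Otimes>\<^sub>M lborel) \<Otimes>\<^sub>M lborel)"
      by (rule meas_sets_cong[rotated]) (simp add: sets1 cong: sets_pair_measure_cong)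
    from lborel.borel_measurable_nn_integral_fst[OF this]
    have "(\<lambda>y. \<Psi> (snd y) (fst y)) \<in> borel_measurable (\<nu>1 \<Otimes>\<^sub>M lborel)"
      by (simp add: \<Psi>_def)
    then have "(\<lambda>(r, t). \<Psi> t r) \<in> borel_measurable (\<nu>1 \<Otimes>\<^sub>M lborel)"
      by (simp add: case_prod_beta')
    then show ?thesis unfolding F_def by measurable
  qed
  have Fm1: "(\<lambda>r. \<integral>\<^sup>+ t. F r t \<partial>lborel) \<in> borel_measurable \<nu>"
  proof -
    have "(\<lambda>r. \<integral>\<^sup>+ t. F r t \<partial>lborel) \<in> borel_measurable \<nu>1"
      using lborel.borel_measurable_nn_integral_fst[OF Fm] by simp
    then show ?thesis by (rule meas_sets_cong[rotated]) (simp add: sets1 sets_levy[OF lm])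
  qed

  have stepAB: "indicator J r * distrib_fun (ball_avg G R) (1 / \<bar>r\<bar>) \<le> indicator J r * (\<integral>\<^sup>+ t. F r t \<partial>lborel)" for r
  proof (cases "r \<in> J")
    case False then show ?thesis by simp
  next
    case True
    then have r1: "\<bar>r\<bar> > 1" by (simp add: J_def)
    define B where "B = {x. 1 \<le> \<bar>f x * r\<bar>}"
    have Bb: "B \<in> sets borel" unfolding B_def using fm by measurable
    have "distrib_fun (ball_avg G R) (1 / \<bar>r\<bar>) = emeasure lebesgue {x. \<bar>ball_avg G R x\<bar> > 1 / \<bar>r\<bar>}"
      by (simp add: distrib_fun_def)
    also have "\<dots> \<le> emeasure lebesgue B"
    proof (rule emeasure_mono_AE)
      show "B \<in> sets lebesgue" using Bb by (simp add: sets_completionI_sets)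
      have "AE x in lebesgue. (\<lambda>n. simple_fun_of (ps n) x) \<longlonglongrightarrow> f x \<and> f x = convol G \<phi> x"
        using AEf by (rule AE_completion)
      then show "AE x in lebesgue. x \<in> {x. \<bar>ball_avg G R x\<bar> > 1 / \<bar>r\<bar>} \<longrightarrow> x \<in> B"
      proof (rule eventually_mono)
        fix x assume "(\<lambda>n. simple_fun_of (ps n) x) \<longlonglongrightarrow> f x \<and> f x = convol G \<phi> x"
        then have fx: "f x = convol G \<phi> x" by simp
        have ge: "\<bar>f x\<bar> \<ge> ball_avg G R x"
          using conv_abs_ge[OF li sgn R, of x] fx by (simp add: \<phi>_def)
        have nn: "ball_avg G R x \<ge> 0"
          unfolding ball_avg_def set_lebesgue_integral_def by (intro integral_nonneg_AE) auto
        show "x \<in> {x. \<bar>ball_avg G R x\<bar> > 1 / \<bar>r\<bar>} \<longrightarrow> x \<in> B"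
        proof
          assume "x \<in> {x. \<bar>ball_avg G R x\<bar> > 1 / \<bar>r\<bar>}"
          then have "\<bar>f x\<bar> > 1 / \<bar>r\<bar>" using ge nn by simp
          then have "\<bar>f x\<bar> * \<bar>r\<bar> > 1" using r1 by (simp add: field_simps)
          then show "x \<in> B" by (simp add: B_def abs_mult)
        qed
      qed
    qed
    also have "\<dots> = emeasure lborel B"
      using Bb by (simp add: emeasure_completion)
    also have "\<dots> = (\<integral>\<^sup>+ x. indicator B x \<partial>lborel)"
      using Bb by simp
    also have "\<dots> \<le> (\<integral>\<^sup>+ x. \<integral>\<^sup>+ t. ennreal (indicator {0..2} t * (1 - cos (t * (f x * r)))) \<partial>lborel \<partial>lborel)"
    proof (rule nn_integral_mono)
      fix x show "indicator B x \<le> (\<integral>\<^sup>+ t. ennreal (indicator {0..2} t * (1 - cos (t * (f x * r)))) \<partial>lborel)"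
        using tavg[of "f x * r"] by (cases "x \<in> B") (auto simp: B_def)
    qed
    also have "\<dots> = (\<integral>\<^sup>+ t. \<integral>\<^sup>+ x. ennreal (indicator {0..2} t * (1 - cos (t * (f x * r)))) \<partial>lborel \<partial>lborel)"
    proof (rule lborel_pair.Fubini'[symmetric])
      show "(\<lambda>(x, t). ennreal (indicator {0..2} t * (1 - cos (t * (f x * r))))) \<in> borel_measurable (lborel \<Otimes>\<^sub>M lborel)"
        by measurable
    qed
    also have "\<dots> = (\<integral>\<^sup>+ t. F r t \<partial>lborel)"
    proof (rule nn_integral_cong)
      fix t
      have "(\<integral>\<^sup>+ x. ennreal (indicator {0..2} t * (1 - cos (t * (f x * r)))) \<partial>lborel)
          = (\<integral>\<^sup>+ x. ennreal (indicator {0..2} t) * ennreal (1 - cos (t * f x * r)) \<partial>lborel)"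
        by (intro nn_integral_cong) (simp add: ennreal_mult'' mult.assoc)
      also have "\<dots> = ennreal (indicator {0..2} t) * \<Psi> t r"
        unfolding \<Psi>_def by (rule nn_integral_cmult) measurable
      finally show "(\<integral>\<^sup>+ x. ennreal (indicator {0..2} t * (1 - cos (t * (f x * r)))) \<partial>lborel) = F r t"
        by (simp add: F_def)
    qed
    finally show ?thesis using True by simp
  qed

  have "(\<integral>\<^sup>+ r. indicator {r. \<bar>r\<bar> > 1} r * distrib_fun (ball_avg G R) (1 / \<bar>r\<bar>) \<partial>\<nu>)
      \<le> (\<integral>\<^sup>+ r. indicator J r * (\<integral>\<^sup>+ t. F r t \<partial>lborel) \<partial>\<nu>)"
    unfolding J_def[symmetric] by (intro nn_integral_mono stepAB)
  also have "\<dots> = (\<integral>\<^sup>+ r. (\<integral>\<^sup>+ t. F r t \<partial>lborel) \<partial>\<nu>1)"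
    unfolding \<nu>1_def by (rule nn_integral_density[symmetric]) (use Jm Fm1 in auto)
  also have "\<dots> = (\<integral>\<^sup>+ t. (\<integral>\<^sup>+ r. F r t \<partial>\<nu>1) \<partial>lborel)"
    by (rule pair_sigma_finite.Fubini'[OF psf Fm, symmetric])
  also have "\<dots> \<le> (\<integral>\<^sup>+ t. ennreal (indicator {0..2::real} t) * ennreal C \<partial>lborel)"
  proof (rule nn_integral_mono)
    fix t
    show "(\<integral>\<^sup>+ r. F r t \<partial>\<nu>1) \<le> ennreal (indicator {0..2::real} t) * ennreal C"
    proof (cases "t \<in> {0..2}")
      case False then show ?thesis by (simp add: F_def)
    next
      case True
      have Pm: "(\<lambda>r. \<Psi> t r) \<in> borel_measurable \<nu>"
      proof -
        have "(\<lambda>(r, x). ennreal (1 - cos (t * f x * r))) \<in> borel_measurable (borel \<Otimes>\<^sub>M lborel)"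
          by measurable
        then have "(\<lambda>(r, x). ennreal (1 - cos (t * f x * r))) \<in> borel_measurable (\<nu> \<Otimes>\<^sub>M lborel)"
          by (rule meas_sets_cong[rotated]) (simp add: sets_levy[OF lm] cong: sets_pair_measure_cong)
        from lborel.borel_measurable_nn_integral_fst[OF this] show ?thesis by (simp add: \<Psi>_def)
      qed
      have "(\<integral>\<^sup>+ r. F r t \<partial>\<nu>1) = (\<integral>\<^sup>+ r. \<Psi> t r \<partial>\<nu>1)"
        using True by (simp add: F_def)
      also have "\<dots> = (\<integral>\<^sup>+ r. indicator J r * \<Psi> t r \<partial>\<nu>)"
        unfolding \<nu>1_def by (rule nn_integral_density) (use Jm Pm in auto)
      also have "\<dots> \<le> (\<integral>\<^sup>+ r. \<Psi> t r \<partial>\<nu>)"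
        by (intro nn_integral_mono) (simp add: indicator_def)
      also have "\<dots> \<le> ennreal C" using fatou True by simp
      finally show ?thesis using True by simp
    qed
  qed
  also have "\<dots> = (\<integral>\<^sup>+ t. ennreal C * indicator {0..2::real} t \<partial>lborel)"
    by (intro nn_integral_cong) (simp add: ennreal_indicator mult.commute)
  also have "\<dots> = ennreal C * emeasure lborel {0..2::real}"
    by (rule nn_integral_cmult_indicator) simp
  also have "\<dots> < \<infinity>" by (simp add: ennreal_mult_less_top)
  finally show ?thesis .
qed

end
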